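(* Let $B=\{\boldsymbol\phi,\boldsymbol D_0,\boldsymbol D_1,\boldsymbol R\}$ be the matrix representation of a bivariate $MMPP_2$ and let $\boldsymbol A=(T_1,K_1)$ be the (row vector of) time and distance until the first failure. Then there exists $K>0$ such that the moment-generating function of $\boldsymbol A$ exists and is given by $$H(\boldsymbol\theta)=E\left(e^{\boldsymbol A\boldsymbol\theta}\right)=\boldsymbol\phi\left(-\boldsymbol\Delta(\boldsymbol R\boldsymbol\theta)-\boldsymbol D_0\right)^{-1}\boldsymbol D_1\boldsymbol e$$ for any $\theta_1,\theta_2<K$, where $\boldsymbol\theta=[\theta_1,\theta_2]^t$.
   Context: Bivariate $MMPP_2$ with parameters $\boldsymbol\lambda=(\lambda_1,\lambda_2,\lambda_3)$, $\boldsymbol\omega=(\omega_1,\omega_2,\omega_3)$ ($\lambda_1,\lambda_2,\omega_1,\omega_2>0$, $\lambda_3,\omega_3\ge0$) and $a,b\in[0,1]$: using the Marshall–Olkin law $BVE(\mu_1,\mu_2,\mu_3)$ defined by $P(X>x,Y>y)=\exp\{-\mu_1x-\mu_2y-\mu_3\max(x,y)\}$, the process starts in state $s_0\in\{1,2\}$ with $P(s_0=1)=\phi_1$; at each step, in state 1 (resp. 2) an increment $(X,Y)\sim BVE(\boldsymbol\lambda)$ (resp. $BVE(\boldsymbol\omega)$) is drawn independently; then from state 1 with probability $a$ there is no failure and the state becomes 2, with probability $1-a$ a failure occurs and the state stays 1 (analogously with $b$ from state 2). $(T_n,K_n)$ is the sum of the increments between the $(n-1)$-th and the $n$-th failures.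 Here $\phi_1=\frac{b(1-a)}{b(1-a)+a(1-b)}$, $\phi_2=\frac{a(1-b)}{b(1-a)+a(1-b)}$, $\gamma_{t1}=\lambda_1+\lambda_3$, $\gamma_{k1}=\lambda_2+\lambda_3$, $\gamma_{t2}=\omega_1+\omega_3$, $\gamma_{k2}=\omega_2+\omega_3$. The matrix representation is $\boldsymbol\phi=(\phi_1,0,0,\phi_2,0,0)$, $$\boldsymbol D_0=\begin{pmatrix}-(\lambda_1+\lambda_2+\lambda_3)&\lambda_2&\lambda_1&\lambda_3a&0&0\\0&-\gamma_{t1}&0&\gamma_{t1}a&0&0\\0&0&-\gamma_{k1}&\gamma_{k1}a&0&0\\\omega_3b&0&0&-(\omega_1+\omega_2+\omega_3)&\omega_2&\omega_1\\\gamma_{t2}b&0&0&0&-\gamma_{t2}&0\\\gamma_{k2}b&0&0&0&0&-\gamma_{k2}\end{pmatrix},$$ $$\boldsymbol D_1=\begin{pmatrix}\lambda_3(1-a)&0&0&0&0&0\\\gamma_{t1}(1-a)&0&0&0&0&0\\\gamma_{k1}(1-a)&0&0&0&0&0\\0&0&0&\omega_3(1-b)&0&0\\0&0&0&\gamma_{t2}(1-b)&0&0\\0&0&0&\gamma_{k2}(1-b)&0&0\end{pmatrix},\quad \boldsymbol R=\begin{pmatrix}1&1\\1&0\\0&1\\1&1\\1&0\\0&1\end{pmatrix}.$$ $\boldsymbol\Delta(\boldsymbol v)$ denotes the diagonal matrix with the vector $\boldsymbol v$ on its diagonal, and $\boldsymbol e$ is the column vector of ones. *)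

theory Defs
  imports "HOL-Analysis.Analysis" "HOL-Probability.Probability"
begin

text \<open>Rows/columns of a 6x6 (resp. 6x2) matrix are indexed by the numeral types 6 and 2;
  the element i of such a type corresponds to list position nat (Rep_bit0 i), i.e. to the
  paper's index (nat (Rep_bit0 i) + 1).\<close>

definition vec6 :: "real list \<Rightarrow> real ^ 6" where
  "vec6 xs = (\<chi> i. xs ! nat (Rep_bit0 i))"

definition mat66 :: "real list list \<Rightarrow> real ^ 6 ^ 6" where
  "mat66 L = (\<chi> i j. L ! nat (Rep_bit0 i) ! nat (Rep_bit0 j))"

definition mat62 :: "real list list \<Rightarrow> real ^ 2 ^ 6" where
  "mat62 L = (\<chi> i j. L ! nat (Rep_bit0 i) ! nat (Rep_bit0 j))"

definition Delta :: "real ^ 'n \<Rightarrow> real ^ 'n ^ 'n" where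
  "Delta v = (\<chi> i j. if i = j then v $ i else 0)"

definition ones :: "real ^ 'n" where
  "ones = (\<chi> i. 1)"

definition phi1 :: "real \<Rightarrow> real \<Rightarrow> real" where
  "phi1 a b = b * (1 - a) / (b * (1 - a) + a * (1 - b))"

definition phi2 :: "real \<Rightarrow> real \<Rightarrow> real" where
  "phi2 a b = a * (1 - b) / (b * (1 - a) + a * (1 - b))"

definition mmpp_phi :: "real \<Rightarrow> real \<Rightarrow> real ^ 6" where
  "mmpp_phi a b = vec6 [phi1 a b, 0, 0, phi2 a b, 0, 0]"

definition mmpp_D0 :: "real \<Rightarrow> real \<Rightarrow> real \<Rightarrow> real \<Rightarrow> real \<Rightarrow> real \<Rightarrow> real \<Rightarrow> real
    \<Rightarrow> real ^ 6 ^ 6" where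
  "mmpp_D0 l1 l2 l3 w1 w2 w3 a b =
    (let gt1 = l1 + l3; gk1 = l2 + l3; gt2 = w1 + w3; gk2 = w2 + w3 in
     mat66 [[-(l1 + l2 + l3), l2, l1, l3 * a, 0, 0],
            [0, -gt1, 0, gt1 * a, 0, 0],
            [0, 0, -gk1, gk1 * a, 0, 0],
            [w3 * b, 0, 0, -(w1 + w2 + w3), w2, w1],
            [gt2 * b, 0, 0, 0, -gt2, 0],
            [gk2 * b, 0, 0, 0, 0, -gk2]])"

definition mmpp_D1 :: "real \<Rightarrow> real \<Rightarrow> real \<Rightarrow> real \<Rightarrow> real \<Rightarrow> real \<Rightarrow> real \<Rightarrow> real
    \<Rightarrow> real ^ 6 ^ 6" where
  "mmpp_D1 l1 l2 l3 w1 w2 w3 a b =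
    (let gt1 = l1 + l3; gk1 = l2 + l3; gt2 = w1 + w3; gk2 = w2 + w3 in
     mat66 [[l3 * (1 - a), 0, 0, 0, 0, 0],
            [gt1 * (1 - a), 0, 0, 0, 0, 0],
            [gk1 * (1 - a), 0, 0, 0, 0, 0],
            [0, 0, 0, w3 * (1 - b), 0, 0],
            [0, 0, 0, gt2 * (1 - b), 0, 0],
            [0, 0, 0, gk2 * (1 - b), 0, 0]])"

definition mmpp_R :: "real ^ 2 ^ 6" where
  "mmpp_R = mat62 [[1, 1], [1, 0], [0, 1], [1, 1], [1, 0], [0, 1]]"

definition mmpp_H :: "real \<Rightarrow> real \<Rightarrow> real \<Rightarrow> real \<Rightarrow> real \<Rightarrow> real \<Rightarrow> real \<Rightarrow> real
    \<Rightarrow> real \<Rightarrow> real \<Rightarrow> real" where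
  "mmpp_H l1 l2 l3 w1 w2 w3 a b th1 th2 =
    (let theta = (\<chi> i. if i = 0 then th1 else th2) :: real ^ 2 in
     (mmpp_phi a b v* matrix_inv (- Delta (mmpp_R *v theta) - mmpp_D0 l1 l2 l3 w1 w2 w3 a b))
       \<bullet> (mmpp_D1 l1 l2 l3 w1 w2 w3 a b *v ones))"

definition BVE_surv :: "real \<Rightarrow> real \<Rightarrow> real \<Rightarrow> real \<Rightarrow> real \<Rightarrow> real" where
  "BVE_surv m1 m2 m3 x y = exp (- m1 * x - m2 * y - m3 * max x y)"

text \<open>Primitive random quantities: the initial state s0 (values 1 or 2); for each state s in {1,2}
  and step j (j = 0,1,2,...) an increment Z s j (used if the process is in state s at step j)
  and a coin C s j (True = no failure and switch of state; False = failure, state kept).\<close>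

datatype mmpp_index = Init | Incr nat nat | Coin nat nat

definition mmpp_indices :: "mmpp_index set" where
  "mmpp_indices = {Init} \<union> {Incr s j | s j. s \<in> {1, 2}} \<union> {Coin s j | s j. s \<in> {1, 2}}"

definition gen_sets :: "'a measure \<Rightarrow> ('a \<Rightarrow> 'b) \<Rightarrow> 'b measure \<Rightarrow> 'a set set" where
  "gen_sets M X N = {X -` A \<inter> space M | A. A \<in> sets N}"

fun mmpp_state :: "(nat \<Rightarrow> nat \<Rightarrow> 'a \<Rightarrow> bool) \<Rightarrow> ('a \<Rightarrow> nat) \<Rightarrow> 'a \<Rightarrow> nat \<Rightarrow> nat" where
  "mmpp_state C s0 w 0 = s0 w"
| "mmpp_state C s0 w (Suc j) =
     (let s = mmpp_state C s0 w j in if C s j w then 3 - s else s)"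

definition first_failure :: "(nat \<Rightarrow> nat \<Rightarrow> 'a \<Rightarrow> bool) \<Rightarrow> ('a \<Rightarrow> nat) \<Rightarrow> 'a \<Rightarrow> nat" where
  "first_failure C s0 w = (LEAST j. \<not> C (mmpp_state C s0 w j) j w)"

definition first_TK :: "(nat \<Rightarrow> nat \<Rightarrow> 'a \<Rightarrow> real \<times> real) \<Rightarrow> (nat \<Rightarrow> nat \<Rightarrow> 'a \<Rightarrow> bool)
    \<Rightarrow> ('a \<Rightarrow> nat) \<Rightarrow> 'a \<Rightarrow> real \<times> real" where
  "first_TK Z C s0 w = (\<Sum>j \<le> first_failure C s0 w. Z (mmpp_state C s0 w j) j w)"

end

theory Submission
  imports Defs "HOL-Real_Asymp.Real_Asymp"
begin


definition Fa :: "real \<Rightarrow> real \<Rightarrow> real" where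
  "Fa t x = (if t = 0 then x else (exp (t*x) - 1)/t)"

lemma Fa_exp: "exp (t*x) = 1 + t * Fa t x"
  by (simp add: Fa_def)

lemma Fa_nonneg: assumes "0 \<le> x" shows "0 \<le> Fa t x"
proof (cases "t = 0")
  case False
  show ?thesis
  proof (cases "t > 0")
    case True
    then have "exp (t*x) \<ge> 1" using assms by simp
    then show ?thesis using True by (simp add: Fa_def)
  next
    case f2: False
    then have "exp (t*x) \<le> 1" using assms False by (simp add: mult_nonpos_nonneg)
    then show ?thesis using False f2 by (simp add: Fa_def divide_nonpos_neg)
  qed
qed (use assms in \<open>simp add: Fa_def\<close>)

lemma Fa_deriv: "(Fa t has_real_derivative exp (t*x)) (at x)"
proof (cases "t = 0")
  case True
  then show ?thesis by (simp add: Fa_def[abs_def])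
next
  case False
  have "((\<lambda>x. (exp (t*x) - 1)/t) has_real_derivative exp (t*x)) (at x)"
    by (rule derivative_eq_intros refl | use False in simp)+
  then show ?thesis using False by (simp add: Fa_def[abs_def])
qed

lemma nn_Icc_exp: assumes "0 \<le> x"
  shows "(\<integral>\<^sup>+u. ennreal (exp (t*u)) * indicator {0..x} u \<partial>lborel) = ennreal (Fa t x)"
proof -
  have "(\<integral>\<^sup>+u. ennreal (exp (t*u)) * indicator {0..x} u \<partial>lborel) = ennreal (Fa t x - Fa t 0)"
    by (rule nn_integral_FTC_Icc) (use assms Fa_deriv in auto)
  then show ?thesis by (simp add: Fa_def)
qed

lemma nn_Ico_exp: assumes "0 \<le> x"
  shows "(\<integral>\<^sup>+u. ennreal (exp (t*u)) * indicator {0..<x} u \<partial>lborel) = ennreal (Fa t x)"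
proof -
  have "(\<integral>\<^sup>+u. ennreal (exp (t*u)) * indicator {0..<x} u \<partial>lborel)
      = (\<integral>\<^sup>+u. ennreal (exp (t*u)) * indicator {0..x} u \<partial>lborel)"
    by (rule nn_integral_cong_AE) (use AE_lborel_singleton[of x] in \<open>eventually_elim, auto simp: indicator_def\<close>)
  then show ?thesis using nn_Icc_exp[OF assms] by simp
qed

lemma nn_exp_atLeast: assumes "c < 0"
  shows "(\<integral>\<^sup>+u. ennreal (exp (c*u)) * indicator {a..} u \<partial>lborel) = ennreal (exp (c*a)/(-c))"
proof -
  have "(\<integral>\<^sup>+u. ennreal (exp (c*u)) * indicator {a..} u \<partial>lborel) = ennreal (0 - exp (c*a)/c)"
  proof (rule nn_integral_FTC_atLeast)
    show "((\<lambda>u. exp (c*u)/c) \<longlongrightarrow> 0) at_top" using assms by real_asymp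
    fix x show "((\<lambda>u. exp (c*u)/c) has_real_derivative exp (c*x)) (at x)"
      by (rule derivative_eq_intros refl | use assms in simp)+
  qed auto
  then show ?thesis by simp
qed

lemma meas1:
  fixes X :: "'a \<Rightarrow> real"
  assumes [measurable]: "X \<in> borel_measurable M" and [measurable]: "h \<in> borel_measurable borel"
  shows "(\<lambda>(w,u). ennreal (h u) * indicator {0..<X w} u) \<in> borel_measurable (M \<Otimes>\<^sub>M lborel)"
proof -
  have "(\<lambda>(w,u). ennreal (h u) * indicator {0..<X w} u) = (\<lambda>p. ennreal (h (snd p)) * (if 0 \<le> snd p \<and> snd p < X (fst p) then 1 else 0))"
    by (auto simp: indicator_def fun_eq_iff)
  also have "\<dots> \<in> borel_measurable (M \<Otimes>\<^sub>M lborel)" by measurable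
  finally show ?thesis .
qed

lemma (in prob_space) tonelli1:
  fixes X :: "'a \<Rightarrow> real"
  assumes [measurable]: "X \<in> borel_measurable M" and [measurable]: "h \<in> borel_measurable borel"
  shows "(\<integral>\<^sup>+w. (\<integral>\<^sup>+u. ennreal (h u) * indicator {0..<X w} u \<partial>lborel) \<partial>M)
       = (\<integral>\<^sup>+u. ennreal (h u) * indicator {0..} u * emeasure M {w\<in>space M. u < X w} \<partial>lborel)"
proof -
  interpret pair_sigma_finite M lborel
    by (simp add: lborel.sigma_finite_measure_axioms pair_sigma_finite.intro sigma_finite_measure_axioms)
  have "(\<integral>\<^sup>+w. (\<integral>\<^sup>+u. ennreal (h u) * indicator {0..<X w} u \<partial>lborel) \<partial>M)
      = (\<integral>\<^sup>+u. (\<integral>\<^sup>+w. ennreal (h u) * indicator {0..<X w} u \<partial>M) \<partial>lborel)"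
    using Fubini'[of "\<lambda>w u. ennreal (h u) * indicator {0..<X w} u", OF meas1[OF assms]] by simp
  also have "\<dots> = (\<integral>\<^sup>+u. ennreal (h u) * indicator {0..} u * emeasure M {w\<in>space M. u < X w} \<partial>lborel)"
  proof (rule nn_integral_cong)
    fix u :: real
    have "(\<integral>\<^sup>+w. ennreal (h u) * indicator {0..<X w} u \<partial>M)
        = (\<integral>\<^sup>+w. (ennreal (h u) * indicator {0..} u) * indicator {w\<in>space M. u < X w} w \<partial>M)"
      by (rule nn_integral_cong) (auto simp: indicator_def)
    also have "\<dots> = ennreal (h u) * indicator {0..} u * emeasure M {w\<in>space M. u < X w}"
      by (subst nn_integral_cmult_indicator) auto
    finally show "(\<integral>\<^sup>+w. ennreal (h u) * indicator {0..<X w} u \<partial>M) = ennreal (h u) * indicator {0..} u * emeasure M {w\<in>space M. u < X w}" .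
  qed
  finally show ?thesis .
qed

lemma (in prob_space) tonelli2:
  fixes X Y :: "'a \<Rightarrow> real"
  assumes [measurable]: "X \<in> borel_measurable M" "Y \<in> borel_measurable M"
    and [measurable]: "h1 \<in> borel_measurable borel" "h2 \<in> borel_measurable borel"
  shows "(\<integral>\<^sup>+w. (\<integral>\<^sup>+u. ennreal (h1 u) * indicator {0..<X w} u \<partial>lborel) *
                (\<integral>\<^sup>+v. ennreal (h2 v) * indicator {0..<Y w} v \<partial>lborel) \<partial>M)
       = (\<integral>\<^sup>+u. \<integral>\<^sup>+v. ennreal (h1 u) * ennreal (h2 v) * indicator {0..} u * indicator {0..} v *
              emeasure M {w\<in>space M. u < X w \<and> v < Y w} \<partial>lborel \<partial>lborel)"
proof -
  interpret P: pair_sigma_finite M lborel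
    by (simp add: lborel.sigma_finite_measure_axioms pair_sigma_finite.intro sigma_finite_measure_axioms)
  define F where "F w u v = ennreal (h1 u) * indicator {0..<X w} u * (ennreal (h2 v) * indicator {0..<Y w} v)" for w u v
  have mF: "(\<lambda>((w,u),v). F w u v) \<in> borel_measurable ((M \<Otimes>\<^sub>M lborel) \<Otimes>\<^sub>M lborel)"
  proof -
    have "(\<lambda>((w,u),v). F w u v) = (\<lambda>p. ennreal (h1 (snd (fst p))) * (if 0 \<le> snd (fst p) \<and> snd (fst p) < X (fst (fst p)) then 1 else 0)
       * (ennreal (h2 (snd p)) * (if 0 \<le> snd p \<and> snd p < Y (fst (fst p)) then 1 else 0)))"
      by (auto simp: indicator_def fun_eq_iff F_def)
    also have "\<dots> \<in> borel_measurable ((M \<Otimes>\<^sub>M lborel) \<Otimes>\<^sub>M lborel)" by measurable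
    finally show ?thesis .
  qed
  have mF2: "(\<lambda>(w,v). F w u v) \<in> borel_measurable (M \<Otimes>\<^sub>M lborel)" for u
  proof -
    have "(\<lambda>(w,v). F w u v) = (\<lambda>p. ennreal (h1 u) * (if 0 \<le> u \<and> u < X (fst p) then 1 else 0)
       * (ennreal (h2 (snd p)) * (if 0 \<le> snd p \<and> snd p < Y (fst p) then 1 else 0)))"
      by (auto simp: indicator_def fun_eq_iff F_def)
    also have "\<dots> \<in> borel_measurable (M \<Otimes>\<^sub>M lborel)" by measurable
    finally show ?thesis .
  qed
  have m1: "(\<lambda>(w,u). \<integral>\<^sup>+v. F w u v \<partial>lborel) \<in> borel_measurable (M \<Otimes>\<^sub>M lborel)"
    using lborel.borel_measurable_nn_integral_fst[OF mF] by (simp add: case_prod_beta')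
  have "(\<integral>\<^sup>+w. (\<integral>\<^sup>+u. ennreal (h1 u) * indicator {0..<X w} u \<partial>lborel) *
                (\<integral>\<^sup>+v. ennreal (h2 v) * indicator {0..<Y w} v \<partial>lborel) \<partial>M)
      = (\<integral>\<^sup>+w. \<integral>\<^sup>+u. \<integral>\<^sup>+v. F w u v \<partial>lborel \<partial>lborel \<partial>M)"
  proof (rule nn_integral_cong)
    fix w
    have "(\<integral>\<^sup>+u. ennreal (h1 u) * indicator {0..<X w} u \<partial>lborel) *
                (\<integral>\<^sup>+v. ennreal (h2 v) * indicator {0..<Y w} v \<partial>lborel)
        = (\<integral>\<^sup>+u. ennreal (h1 u) * indicator {0..<X w} u * (\<integral>\<^sup>+v. ennreal (h2 v) * indicator {0..<Y w} v \<partial>lborel) \<partial>lborel)"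
      by (rule nn_integral_multc[symmetric]) measurable
    also have "\<dots> = (\<integral>\<^sup>+u. \<integral>\<^sup>+v. F w u v \<partial>lborel \<partial>lborel)"
      unfolding F_def by (intro nn_integral_cong nn_integral_cmult[symmetric]) measurable
    finally show "(\<integral>\<^sup>+u. ennreal (h1 u) * indicator {0..<X w} u \<partial>lborel) *
                (\<integral>\<^sup>+v. ennreal (h2 v) * indicator {0..<Y w} v \<partial>lborel) = (\<integral>\<^sup>+u. \<integral>\<^sup>+v. F w u v \<partial>lborel \<partial>lborel)" .
  qed
  also have "\<dots> = (\<integral>\<^sup>+u. \<integral>\<^sup>+w. \<integral>\<^sup>+v. F w u v \<partial>lborel \<partial>M \<partial>lborel)"
    using P.Fubini'[of "\<lambda>w u. \<integral>\<^sup>+v. F w u v \<partial>lborel", OF m1] by simp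
  also have "\<dots> = (\<integral>\<^sup>+u. \<integral>\<^sup>+v. \<integral>\<^sup>+w. F w u v \<partial>M \<partial>lborel \<partial>lborel)"
    by (intro nn_integral_cong) (use P.Fubini'[of "\<lambda>w v. F w _ v", OF mF2] in simp)
  also have "\<dots> = (\<integral>\<^sup>+u. \<integral>\<^sup>+v. ennreal (h1 u) * ennreal (h2 v) * indicator {0..} u * indicator {0..} v *
              emeasure M {w\<in>space M. u < X w \<and> v < Y w} \<partial>lborel \<partial>lborel)"
  proof (intro nn_integral_cong)
    fix u v :: real
    have "(\<integral>\<^sup>+w. F w u v \<partial>M) = (\<integral>\<^sup>+w. (ennreal (h1 u) * ennreal (h2 v) * indicator {0..} u * indicator {0..} v) *
              indicator {w\<in>space M. u < X w \<and> v < Y w} w \<partial>M)"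
      by (rule nn_integral_cong) (auto simp: indicator_def F_def)
    also have "\<dots> = ennreal (h1 u) * ennreal (h2 v) * indicator {0..} u * indicator {0..} v *
              emeasure M {w\<in>space M. u < X w \<and> v < Y w}"
      by (subst nn_integral_cmult_indicator) auto
    finally show "(\<integral>\<^sup>+w. F w u v \<partial>M) = ennreal (h1 u) * ennreal (h2 v) * indicator {0..} u * indicator {0..} v *
              emeasure M {w\<in>space M. u < X w \<and> v < Y w}" .
  qed
  finally show ?thesis .
qed

lemma inner_G:
  assumes "0 \<le> y" "a < 0" "m3 \<ge> 0"
  shows "(\<integral>\<^sup>+u. ennreal (exp (a*u - m3 * max u y)) * indicator {0..} u \<partial>lborel)
       = ennreal (exp (-m3*y) * Fa a y + exp ((a-m3)*y)/(m3-a))"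
proof -
  have "(\<integral>\<^sup>+u. ennreal (exp (a*u - m3 * max u y)) * indicator {0..} u \<partial>lborel)
      = (\<integral>\<^sup>+u. ennreal (exp (-m3*y)) * (ennreal (exp (a*u)) * indicator {0..y} u)
                + ennreal (exp ((a-m3)*u)) * indicator {y<..} u \<partial>lborel)"
  proof (rule nn_integral_cong)
    fix u :: real
    show "ennreal (exp (a*u - m3 * max u y)) * indicator {0..} u =
      ennreal (exp (-m3*y)) * (ennreal (exp (a*u)) * indicator {0..y} u) + ennreal (exp ((a-m3)*u)) * indicator {y<..} u"
    proof (cases "u \<le> y")
      case True
      have "exp (a*u - m3 * max u y) = exp (-m3*y) * exp (a*u)"
        using True by (simp add: max_def mult_exp_exp exp_diff exp_minus field_simps)
      then show ?thesis using True by (auto simp: indicator_def ennreal_mult)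
    next
      case False
      have "exp (a*u - m3 * max u y) = exp ((a-m3)*u)"
        using False by (simp add: max_def algebra_simps)
      then show ?thesis using False assms(1) by (auto simp: indicator_def)
    qed
  qed
  also have "\<dots> = ennreal (exp (-m3*y)) * (\<integral>\<^sup>+u. ennreal (exp (a*u)) * indicator {0..y} u \<partial>lborel)
                + (\<integral>\<^sup>+u. ennreal (exp ((a-m3)*u)) * indicator {y<..} u \<partial>lborel)"
    by (subst nn_integral_add) (auto intro!: nn_integral_cmult)
  also have "(\<integral>\<^sup>+u. ennreal (exp ((a-m3)*u)) * indicator {y<..} u \<partial>lborel)
      = (\<integral>\<^sup>+u. ennreal (exp ((a-m3)*u)) * indicator {y..} u \<partial>lborel)"
    by (rule nn_integral_cong_AE) (use AE_lborel_singleton[of y] in \<open>eventually_elim, auto simp: indicator_def\<close>)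
  also have "\<dots> = ennreal (exp ((a-m3)*y)/(-(a-m3)))"
    by (rule nn_exp_atLeast) (use assms in simp)
  also have "(\<integral>\<^sup>+u. ennreal (exp (a*u)) * indicator {0..y} u \<partial>lborel) = ennreal (Fa a y)"
    by (rule nn_Icc_exp) (use assms in simp)
  finally have eq: "(\<integral>\<^sup>+u. ennreal (exp (a*u - m3 * max u y)) * indicator {0..} u \<partial>lborel) =
     ennreal (exp (-m3*y)) * ennreal (Fa a y) + ennreal (exp ((a-m3)*y)/(-(a-m3)))" .
  have F0: "0 \<le> Fa a y" using Fa_nonneg[OF assms(1)] .
  have Q0: "0 \<le> exp ((a-m3)*y)/(m3-a)" using assms by simp
  have "ennreal (exp (-m3*y)) * ennreal (Fa a y) + ennreal (exp ((a-m3)*y)/(-(a-m3)))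
      = ennreal (exp (-m3*y) * Fa a y) + ennreal (exp ((a-m3)*y)/(m3-a))"
    using F0 by (simp add: ennreal_mult)
  also have "\<dots> = ennreal (exp (-m3*y) * Fa a y + exp ((a-m3)*y)/(m3-a))"
    using F0 Q0 by (simp add: ennreal_plus)
  finally show ?thesis using eq by simp
qed

lemma exp_neg_lim: "(c::real) < 0 \<Longrightarrow> ((\<lambda>y. exp (c*y)) \<longlongrightarrow> 0) at_top"
  by real_asymp

lemma exp_div_deriv: "(c::real) \<noteq> 0 \<Longrightarrow> ((\<lambda>y. exp (c*y)/c) has_real_derivative exp (c*x)) (at x)"
  by (rule derivative_eq_intros refl | simp)+

definition I12 :: "real \<Rightarrow> real \<Rightarrow> real \<Rightarrow> real" where
  "I12 a b m3 = (1/a)*(1/(m3-a-b) - 1/(m3-b)) + 1/((m3-a)*(m3-a-b))"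

lemma outer_G:
  assumes "a < 0" "b < 0" "m3 \<ge> 0"
  shows "(\<integral>\<^sup>+y. ennreal (exp (b*y) * (exp (-m3*y) * Fa a y + exp ((a-m3)*y)/(m3-a))) * indicator {0..} y \<partial>lborel)
       = ennreal (I12 a b m3)"
proof -
  define F where "F y = (1/a) * (exp ((a+b-m3)*y)/(a+b-m3) - exp ((b-m3)*y)/(b-m3)) + (1/(m3-a)) * (exp ((a+b-m3)*y)/(a+b-m3))" for y
  have "(\<integral>\<^sup>+y. ennreal (exp (b*y) * (exp (-m3*y) * Fa a y + exp ((a-m3)*y)/(m3-a))) * indicator {0..} y \<partial>lborel)
      = ennreal (0 - F 0)"
  proof (rule nn_integral_FTC_atLeast)
    have l1: "((\<lambda>y. exp ((a+b-m3)*y)) \<longlongrightarrow> 0) at_top" by (rule exp_neg_lim) (use assms in simp)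
    have l2: "((\<lambda>y. exp ((b-m3)*y)) \<longlongrightarrow> 0) at_top" by (rule exp_neg_lim) (use assms in simp)
    show "(F \<longlongrightarrow> 0) at_top" unfolding F_def
      using tendsto_add[OF tendsto_divide[OF tendsto_diff[OF tendsto_divide[OF l1 tendsto_const] tendsto_divide[OF l2 tendsto_const]] tendsto_const]
         tendsto_divide[OF l1 tendsto_const]] assms by simp
    fix x :: real
    assume "0 \<le> x"
    show "0 \<le> exp (b*x) * (exp (-m3*x) * Fa a x + exp ((a-m3)*x)/(m3-a))"
      using Fa_nonneg[OF \<open>0 \<le> x\<close>, of a] assms by (intro mult_nonneg_nonneg add_nonneg_nonneg) auto
  next
    fix x :: real
    have nz: "a \<noteq> 0" "a+b-m3 \<noteq> 0" "b-m3 \<noteq> 0" "m3-a \<noteq> 0" using assms by auto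
    have e: "exp (b*x) * (exp (-m3*x) * Fa a x + exp ((a-m3)*x)/(m3-a))
        = (exp ((a+b-m3)*x) - exp ((b-m3)*x))/a + exp ((a+b-m3)*x)/(m3-a)"
      using assms by (simp add: Fa_def left_diff_distrib distrib_right exp_add exp_diff exp_minus field_simps)
    have "(F has_real_derivative (1/a) * (exp ((a+b-m3)*x) - exp ((b-m3)*x)) + (1/(m3-a)) * exp ((a+b-m3)*x)) (at x)"
      unfolding F_def[abs_def]
      by (intro DERIV_add DERIV_cmult DERIV_diff exp_div_deriv) (use nz in auto)
    then have "(F has_real_derivative (exp ((a+b-m3)*x) - exp ((b-m3)*x))/a + exp ((a+b-m3)*x)/(m3-a)) (at x)"
      by (simp add: field_simps)
    then show "(F has_real_derivative exp (b*x) * (exp (-m3*x) * Fa a x + exp ((a-m3)*x)/(m3-a))) (at x)"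
      unfolding e .
  qed (use assms in \<open>auto simp: Fa_def\<close>)
  also have "0 - F 0 = I12 a b m3"
  proof -
    have nz: "a \<noteq> 0" "a+b-m3 \<noteq> 0" "b-m3 \<noteq> 0" "m3-a \<noteq> 0" "m3-a-b \<noteq> 0" "m3-b \<noteq> 0" using assms by auto
    have e1: "1/(a+b-m3) = -(1/(m3-a-b))"
      by (metis divide_minus_right minus_diff_eq diff_diff_eq)
    have e2: "1/(b-m3) = -(1/(m3-b))"
      by (metis divide_minus_right minus_diff_eq)
    have g: "0 - ((1/a)*(-(1/p) - -(1/q)) + (1/r)*(-(1/p))) = (1/a)*(1/p - 1/q) + 1/(r*p)"
      if "p \<noteq> 0" "q \<noteq> 0" "r \<noteq> 0" for p q r :: real
      using that nz(1) by (simp add: field_simps)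
    have "F 0 = (1/a)*(1/(a+b-m3) - 1/(b-m3)) + (1/(m3-a))*(1/(a+b-m3))" unfolding F_def by simp
    then show ?thesis unfolding I12_def e1 e2 using g[of "m3-a-b" "m3-b" "m3-a"] nz by simp
  qed
  finally show ?thesis .
qed

lemma L0:
  fixes m1 m2 m3 x y D a :: real
  assumes "x \<noteq> 0" "y \<noteq> 0" "D \<noteq> 0" "a \<noteq> 0" "D = x + y - m3" "a = m3 - y"
  shows "1 + (m1+m3-x)/x + (m2+m3-y)/y + (m1+m3-x)*(m2+m3-y)*((1/a)*(1/D - 1/x) + 1/(y*D))
    = (m2*(m1+m3)/x + m1*(m2+m3)/y + m3)/D"
proof -
  have "1/D - 1/x = (x - D)/(x*D)" using assms by (simp add: field_simps)
  also have "x - D = a" using assms by simp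
  finally have "(1/a)*(1/D - 1/x) = 1/(x*D)" using assms by simp
  then have "1 + (m1+m3-x)/x + (m2+m3-y)/y + (m1+m3-x)*(m2+m3-y)*((1/a)*(1/D - 1/x) + 1/(y*D))
     = 1 + (m1+m3-x)/x + (m2+m3-y)/y + (m1+m3-x)*(m2+m3-y)*(1/(x*D) + 1/(y*D))" by simp
  also have "\<dots> = (m2*(m1+m3)/x + m1*(m2+m3)/y + m3)/D"
    using assms(1-3) by (simp add: field_simps) (simp add: assms(5) algebra_simps)
  finally show ?thesis .
qed

definition Lf :: "real \<Rightarrow> real \<Rightarrow> real \<Rightarrow> real \<Rightarrow> real \<Rightarrow> real" where
  "Lf m1 m2 m3 t1 t2 = (m2*(m1+m3)/(m1+m3-t1) + m1*(m2+m3)/(m2+m3-t2) + m3)/(m1+m2+m3-t1-t2)"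

lemma Fa_meas[measurable]: "Fa t \<in> borel_measurable borel"
  unfolding Fa_def[abs_def] by (cases "t = 0") simp_all

lemma Lf_alg:
  fixes m1 m2 m3 t1 t2 :: real
  assumes "m1 > 0" "m2 > 0" "m3 \<ge> 0" "t1 < m1" "t2 < m2"
  shows "1 + t1 * (1/(m1+m3-t1)) + t2 * (1/(m2+m3-t2)) + t1*t2*I12 (t2-m2) (t1-m1) m3 = Lf m1 m2 m3 t1 t2"
proof -
  have "1 + (m1+m3-(m1+m3-t1))/(m1+m3-t1) + (m2+m3-(m2+m3-t2))/(m2+m3-t2) + (m1+m3-(m1+m3-t1))*(m2+m3-(m2+m3-t2))*((1/(m3-(m2+m3-t2)))*(1/(m1+m2+m3-t1-t2) - 1/(m1+m3-t1)) + 1/((m2+m3-t2)*(m1+m2+m3-t1-t2)))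
    = (m2*(m1+m3)/(m1+m3-t1) + m1*(m2+m3)/(m2+m3-t2) + m3)/(m1+m2+m3-t1-t2)"
    by (rule L0) (use assms in auto)
  moreover have "I12 (t2-m2) (t1-m1) m3 = (1/(m3-(m2+m3-t2)))*(1/(m1+m2+m3-t1-t2) - 1/(m1+m3-t1)) + 1/((m2+m3-t2)*(m1+m2+m3-t1-t2))"
    unfolding I12_def by (simp add: algebra_simps)
  ultimately show ?thesis unfolding Lf_def by simp
qed

lemma (in prob_space) mgf_MO:
  fixes X Y :: "'a \<Rightarrow> real"
  assumes [measurable]: "X \<in> borel_measurable M" "Y \<in> borel_measurable M"
    and S: "\<And>x y. 0 \<le> x \<Longrightarrow> 0 \<le> y \<Longrightarrow> measure M {w\<in>space M. x < X w \<and> y < Y w} = BVE_surv m1 m2 m3 x y"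
    and pos: "m1 > 0" "m2 > 0" "m3 \<ge> 0" "t1 < m1" "t2 < m2"
  shows "(\<integral>\<^sup>+w. ennreal (exp (t1 * X w + t2 * Y w)) \<partial>M) = ennreal (Lf m1 m2 m3 t1 t2)"
proof -
  have "prob {w\<in>space M. 0 < X w \<and> 0 < Y w} = 1"
    using S[of 0 0] by (simp add: BVE_surv_def)
  then have "AE w in M. w \<in> {w\<in>space M. 0 < X w \<and> 0 < Y w}" by (rule AE_prob_1)
  then have AEpos: "AE w in M. 0 < X w \<and> 0 < Y w" by eventually_elim auto
  have eX: "emeasure M {w\<in>space M. u < X w} = ennreal (exp (-(m1+m3)*u))" if "0 \<le> u" for u
  proof -
    have "measure M {w\<in>space M. u < X w} = measure M {w\<in>space M. u < X w \<and> 0 < Y w}"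
      by (rule measure_eq_AE) (use AEpos in \<open>eventually_elim, auto\<close>)
    also have "\<dots> = exp (-(m1+m3)*u)" using S[of u 0] that by (simp add: BVE_surv_def max_def algebra_simps)
    finally show ?thesis by (simp add: emeasure_eq_measure)
  qed
  have eY: "emeasure M {w\<in>space M. y < Y w} = ennreal (exp (-(m2+m3)*y))" if "0 \<le> y" for y
  proof -
    have "measure M {w\<in>space M. y < Y w} = measure M {w\<in>space M. 0 < X w \<and> y < Y w}"
      by (rule measure_eq_AE) (use AEpos in \<open>eventually_elim, auto\<close>)
    also have "\<dots> = exp (-(m2+m3)*y)" using S[of 0 y] that by (simp add: BVE_surv_def max_def algebra_simps)
    finally show ?thesis by (simp add: emeasure_eq_measure)
  qed
  have eXY: "emeasure M {w\<in>space M. u < X w \<and> y < Y w} = ennreal (BVE_surv m1 m2 m3 u y)" if "0 \<le> u" "0 \<le> y" for u y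
    using S[OF that] by (simp add: emeasure_eq_measure)
  have E1: "(\<integral>\<^sup>+w. ennreal (Fa t1 (X w)) \<partial>M) = ennreal (1/(m1+m3-t1))"
  proof -
    have "(\<integral>\<^sup>+w. ennreal (Fa t1 (X w)) \<partial>M) = (\<integral>\<^sup>+w. (\<integral>\<^sup>+u. ennreal (exp (t1*u)) * indicator {0..<X w} u \<partial>lborel) \<partial>M)"
      by (rule nn_integral_cong_AE) (use AEpos in \<open>eventually_elim, simp add: nn_Ico_exp\<close>)
    also have "\<dots> = (\<integral>\<^sup>+u. ennreal (exp (t1*u)) * indicator {0..} u * emeasure M {w\<in>space M. u < X w} \<partial>lborel)"
      by (rule tonelli1) auto
    also have "\<dots> = (\<integral>\<^sup>+u. ennreal (exp ((t1-m1-m3)*u)) * indicator {0..} u \<partial>lborel)"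
    proof (rule nn_integral_cong)
      fix u :: real
      show "ennreal (exp (t1*u)) * indicator {0..} u * emeasure M {w\<in>space M. u < X w} = ennreal (exp ((t1-m1-m3)*u)) * indicator {0..} u"
      proof (cases "0 \<le> u")
        case True
        have "exp (t1*u) * exp (-(m1+m3)*u) = exp ((t1-m1-m3)*u)" by (simp add: mult_exp_exp algebra_simps)
        then show ?thesis using True eX[OF True] by (simp add: ennreal_mult[symmetric])
      qed simp
    qed
    also have "\<dots> = ennreal (exp ((t1-m1-m3)*0)/(-(t1-m1-m3)))"
      by (rule nn_exp_atLeast) (use pos in simp)
    finally show ?thesis by (simp add: algebra_simps)
  qed
  have E2: "(\<integral>\<^sup>+w. ennreal (Fa t2 (Y w)) \<partial>M) = ennreal (1/(m2+m3-t2))"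
  proof -
    have "(\<integral>\<^sup>+w. ennreal (Fa t2 (Y w)) \<partial>M) = (\<integral>\<^sup>+w. (\<integral>\<^sup>+u. ennreal (exp (t2*u)) * indicator {0..<Y w} u \<partial>lborel) \<partial>M)"
      by (rule nn_integral_cong_AE) (use AEpos in \<open>eventually_elim, simp add: nn_Ico_exp\<close>)
    also have "\<dots> = (\<integral>\<^sup>+u. ennreal (exp (t2*u)) * indicator {0..} u * emeasure M {w\<in>space M. u < Y w} \<partial>lborel)"
      by (rule tonelli1) auto
    also have "\<dots> = (\<integral>\<^sup>+u. ennreal (exp ((t2-m2-m3)*u)) * indicator {0..} u \<partial>lborel)"
    proof (rule nn_integral_cong)
      fix u :: real
      show "ennreal (exp (t2*u)) * indicator {0..} u * emeasure M {w\<in>space M. u < Y w} = ennreal (exp ((t2-m2-m3)*u)) * indicator {0..} u"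
      proof (cases "0 \<le> u")
        case True
        have "exp (t2*u) * exp (-(m2+m3)*u) = exp ((t2-m2-m3)*u)" by (simp add: mult_exp_exp algebra_simps)
        then show ?thesis using True eY[OF True] by (simp add: ennreal_mult[symmetric])
      qed simp
    qed
    also have "\<dots> = ennreal (exp ((t2-m2-m3)*0)/(-(t2-m2-m3)))"
      by (rule nn_exp_atLeast) (use pos in simp)
    finally show ?thesis by (simp add: algebra_simps)
  qed
  have E12: "(\<integral>\<^sup>+w. ennreal (Fa t1 (X w) * Fa t2 (Y w)) \<partial>M) = ennreal (I12 (t2-m2) (t1-m1) m3)"
  proof -
    have "(\<integral>\<^sup>+w. ennreal (Fa t1 (X w) * Fa t2 (Y w)) \<partial>M) =
       (\<integral>\<^sup>+w. (\<integral>\<^sup>+u. ennreal (exp (t1*u)) * indicator {0..<X w} u \<partial>lborel) *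
                (\<integral>\<^sup>+y. ennreal (exp (t2*y)) * indicator {0..<Y w} y \<partial>lborel) \<partial>M)"
      by (rule nn_integral_cong_AE) (use AEpos in \<open>eventually_elim, simp add: nn_Ico_exp ennreal_mult Fa_nonneg\<close>)
    also have "\<dots> = (\<integral>\<^sup>+u. \<integral>\<^sup>+y. ennreal (exp (t1*u)) * ennreal (exp (t2*y)) * indicator {0..} u * indicator {0..} y *
              emeasure M {w\<in>space M. u < X w \<and> y < Y w} \<partial>lborel \<partial>lborel)"
      by (rule tonelli2) auto
    also have "\<dots> = (\<integral>\<^sup>+u. ennreal (exp ((t1-m1)*u) * (exp (-m3*u) * Fa (t2-m2) u + exp (((t2-m2)-m3)*u)/(m3-(t2-m2)))) * indicator {0..} u \<partial>lborel)"
    proof (rule nn_integral_cong)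
      fix u :: real
      show "(\<integral>\<^sup>+y. ennreal (exp (t1*u)) * ennreal (exp (t2*y)) * indicator {0..} u * indicator {0..} y *
              emeasure M {w\<in>space M. u < X w \<and> y < Y w} \<partial>lborel) =
         ennreal (exp ((t1-m1)*u) * (exp (-m3*u) * Fa (t2-m2) u + exp (((t2-m2)-m3)*u)/(m3-(t2-m2)))) * indicator {0..} u"
      proof (cases "0 \<le> u")
        case True
        have "(\<integral>\<^sup>+y. ennreal (exp (t1*u)) * ennreal (exp (t2*y)) * indicator {0..} u * indicator {0..} y *
              emeasure M {w\<in>space M. u < X w \<and> y < Y w} \<partial>lborel)
          = (\<integral>\<^sup>+y. ennreal (exp ((t1-m1)*u)) * (ennreal (exp ((t2-m2)*y - m3 * max y u)) * indicator {0..} y) \<partial>lborel)"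
        proof (rule nn_integral_cong)
          fix y :: real
          show "ennreal (exp (t1*u)) * ennreal (exp (t2*y)) * indicator {0..} u * indicator {0..} y *
              emeasure M {w\<in>space M. u < X w \<and> y < Y w} =
              ennreal (exp ((t1-m1)*u)) * (ennreal (exp ((t2-m2)*y - m3 * max y u)) * indicator {0..} y)"
          proof (cases "0 \<le> y")
            case y: True
            have "exp (t1*u) * exp (t2*y) * BVE_surv m1 m2 m3 u y = exp ((t1-m1)*u) * exp ((t2-m2)*y - m3 * max y u)"
              by (simp add: BVE_surv_def mult_exp_exp max.commute algebra_simps)
            then show ?thesis using True y eXY[OF True y]
              by (simp add: ennreal_mult[symmetric] BVE_surv_def)
          qed simp
        qed
        also have "\<dots> = ennreal (exp ((t1-m1)*u)) * (\<integral>\<^sup>+y. ennreal (exp ((t2-m2)*y - m3 * max y u)) * indicator {0..} y \<partial>lborel)"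
          by (rule nn_integral_cmult) simp
        also have "\<dots> = ennreal (exp ((t1-m1)*u)) * ennreal (exp (-m3*u) * Fa (t2-m2) u + exp (((t2-m2)-m3)*u)/(m3-(t2-m2)))"
          by (subst inner_G) (use True pos in auto)
        also have "\<dots> = ennreal (exp ((t1-m1)*u) * (exp (-m3*u) * Fa (t2-m2) u + exp (((t2-m2)-m3)*u)/(m3-(t2-m2)))) * indicator {0..} u"
        proof -
          have "0 \<le> exp (-m3*u) * Fa (t2-m2) u + exp (((t2-m2)-m3)*u)/(m3-(t2-m2))"
            using Fa_nonneg[OF True, of "t2-m2"] pos by (intro add_nonneg_nonneg mult_nonneg_nonneg divide_nonneg_nonneg) auto
          then show ?thesis using True by (simp add: ennreal_mult)
        qed
        finally show ?thesis .
      qed simp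
    qed
    also have "\<dots> = ennreal (I12 (t2-m2) (t1-m1) m3)"
      by (rule outer_G) (use pos in auto)
    finally show ?thesis .
  qed
  have nnX: "AE w in M. 0 \<le> Fa t1 (X w)" using AEpos by eventually_elim (simp add: Fa_nonneg)
  have nnY: "AE w in M. 0 \<le> Fa t2 (Y w)" using AEpos by eventually_elim (simp add: Fa_nonneg)
  have nnXY: "AE w in M. 0 \<le> Fa t1 (X w) * Fa t2 (Y w)" using AEpos by eventually_elim (simp add: Fa_nonneg)
  have h1: "has_bochner_integral M (\<lambda>w. Fa t1 (X w)) (1/(m1+m3-t1))"
    by (rule has_bochner_integral_nn_integral) (use nnX E1 pos in auto)
  have h2: "has_bochner_integral M (\<lambda>w. Fa t2 (Y w)) (1/(m2+m3-t2))"
    by (rule has_bochner_integral_nn_integral) (use nnY E2 pos in auto)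
  have I12nn: "0 \<le> I12 (t2-m2) (t1-m1) m3"
  proof -
    define a where "a = t2 - m2"
    define b where "b = t1 - m1"
    have ab: "a < 0" "b < 0" using pos by (auto simp: a_def b_def)
    have "1/(m3-a-b) \<le> 1/(m3-b)" using ab pos by (intro divide_left_mono) auto
    then have "0 \<le> (1/a)*(1/(m3-a-b) - 1/(m3-b))" using ab by (intro mult_nonpos_nonpos) auto
    moreover have "0 \<le> 1/((m3-a)*(m3-a-b))" using ab pos by simp
    ultimately show ?thesis unfolding I12_def a_def[symmetric] b_def[symmetric] by simp
  qed
  have h12: "has_bochner_integral M (\<lambda>w. Fa t1 (X w) * Fa t2 (Y w)) (I12 (t2-m2) (t1-m1) m3)"
    by (rule has_bochner_integral_nn_integral) (use nnXY E12 I12nn in auto)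
  have h0: "has_bochner_integral M (\<lambda>_. 1::real) 1" by (simp add: has_bochner_integral_iff prob_space)
  have pw: "exp (t1 * X w + t2 * Y w) = 1 + t1 * Fa t1 (X w) + t2 * Fa t2 (Y w) + t1*t2*(Fa t1 (X w) * Fa t2 (Y w))" for w
  proof -
    have "exp (t1 * X w + t2 * Y w) = (1 + t1 * Fa t1 (X w)) * (1 + t2 * Fa t2 (Y w))"
      by (simp add: exp_add Fa_exp[symmetric])
    then show ?thesis by (simp add: algebra_simps)
  qed
  have hb: "has_bochner_integral M (\<lambda>w. exp (t1 * X w + t2 * Y w))
      (1 + t1 * (1/(m1+m3-t1)) + t2 * (1/(m2+m3-t2)) + t1*t2*I12 (t2-m2) (t1-m1) m3)"
    unfolding pw by (intro has_bochner_integral_add has_bochner_integral_mult_right h0 h1 h2 h12)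
  have "(\<integral>\<^sup>+w. ennreal (exp (t1 * X w + t2 * Y w)) \<partial>M) = ennreal (integral\<^sup>L M (\<lambda>w. exp (t1 * X w + t2 * Y w)))"
    by (rule nn_integral_eq_integral) (use hb in \<open>auto simp: has_bochner_integral_iff\<close>)
  also have "integral\<^sup>L M (\<lambda>w. exp (t1 * X w + t2 * Y w)) = Lf m1 m2 m3 t1 t2"
    using has_bochner_integral_integral_eq[OF hb] Lf_alg[OF pos] by simp
  finally show ?thesis .
qed



lemmas R6 = bit0.Rep_0 bit0.Rep_1 bit0.Rep_numeral

lemma UNIV_6: "(UNIV::6 set) = {0,1,2,3,4,5}"
proof -
  have "x \<in> {0,1,2,3,4,5}" for x :: 6
  proof -
    have "Rep_bit0 x \<in> {0..<6}" using Rep_bit0[of x] by simp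
    then have "Rep_bit0 x \<in> {0,1,2,3,4,5}" by auto
    then show ?thesis
      by (auto simp: R6 Rep_bit0_inject[symmetric])
  qed
  then show ?thesis by blast
qed

lemma sum6: "sum f (UNIV::6 set) = f 0 + f 1 + f 2 + f 3 + f 4 + f 5"
  by (subst UNIV_6) (simp add: algebra_simps)

lemma vec6_eqI: "(x::real^6) $ 0 = y $ 0 \<Longrightarrow> x $ 1 = y $ 1 \<Longrightarrow> x $ 2 = y $ 2 \<Longrightarrow>
   x $ 3 = y $ 3 \<Longrightarrow> x $ 4 = y $ 4 \<Longrightarrow> x $ 5 = y $ 5 \<Longrightarrow> x = y"
  unfolding vec_eq_iff
proof
  fix i :: 6
  have "i \<in> {0,1,2,3,4,5}" using UNIV_6 by blast
  then show "x $ 0 = y $ 0 \<Longrightarrow> x $ 1 = y $ 1 \<Longrightarrow> x $ 2 = y $ 2 \<Longrightarrow>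
   x $ 3 = y $ 3 \<Longrightarrow> x $ 4 = y $ 4 \<Longrightarrow> x $ 5 = y $ 5 \<Longrightarrow> x $ i = y $ i" by auto
qed

lemma Rtheta: "mmpp_R *v (\<chi> i. if i = 0 then t1 else t2) = vec6 [t1+t2,t1,t2,t1+t2,t1,t2]"
  apply (rule vec6_eqI)
  apply (simp_all add: matrix_vector_mult_def)
  apply (simp_all add: UNIV_2)
  apply (simp_all add: mmpp_R_def mat62_def R6 vec6_def)
  done

lemma Mt_entries:
  fixes t1 t2 l1 l2 l3 w1 w2 w3 a b :: real
  shows "(- Delta (mmpp_R *v (\<chi> i. if i = 0 then t1 else t2)) - mmpp_D0 l1 l2 l3 w1 w2 w3 a b) *v x
   = vec6 [(l1+l2+l3-t1-t2)*x$0 - l2*x$1 - l1*x$2 - l3*a*x$3,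
                         (l1+l3-t1)*x$1 - (l1+l3)*a*x$3,
                         (l2+l3-t2)*x$2 - (l2+l3)*a*x$3,
                         -w3*b*x$0 + (w1+w2+w3-t1-t2)*x$3 - w2*x$4 - w1*x$5,
                         -(w1+w3)*b*x$0 + (w1+w3-t1)*x$4,
                         -(w2+w3)*b*x$0 + (w2+w3-t2)*x$5]"
  unfolding Rtheta
  apply (rule vec6_eqI)
  apply (simp_all add: matrix_vector_mult_def sum6)
  apply (simp_all add: Delta_def)
  apply (simp_all add: mmpp_D0_def mat66_def vec6_def R6 Let_def)
  apply (simp_all add: algebra_simps)
  done

lemma D1_ones:
  "mmpp_D1 l1 l2 l3 w1 w2 w3 a b *v ones = vec6 [l3*(1-a), (l1+l3)*(1-a), (l2+l3)*(1-a),
     w3*(1-b), (w1+w3)*(1-b), (w2+w3)*(1-b)]"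
  apply (rule vec6_eqI)
  apply (simp_all add: matrix_vector_mult_def sum6)
  apply (simp_all add: mmpp_D1_def mat66_def ones_def vec6_def R6 Let_def)
  done


lemma matrix_inv_left':
  assumes "invertible (A::real^'n^'n)"
  shows "matrix_inv A ** A = mat 1"
proof -
  have "\<exists>A'. A ** A' = mat 1 \<and> A' ** A = mat 1" using assms by (simp add: invertible_def)
  then show ?thesis unfolding matrix_inv_def by (rule someI2_ex) auto
qed

lemma vec6_nth:
  "vec6 xs $ 0 = xs ! 0" "vec6 xs $ 1 = xs ! 1" "vec6 xs $ 2 = xs ! 2"
  "vec6 xs $ 3 = xs ! 3" "vec6 xs $ 4 = xs ! 4" "vec6 xs $ 5 = xs ! 5"
  by (simp_all add: vec6_def R6)

lemma row_alg:
  fixes p q D m g k l1 l2 l3 r a m2 :: real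
  assumes "p \<noteq> 0" "q \<noteq> 0" "D*m = (l2*g/p + l1*k/q + l3)*r" "r = (1-a)+a*m2"
  shows "D*m - l2*(g*r/p) - l1*(k*r/q) - l3*a*m2 = l3*(1-a)"
proof -
  have "D*m - l2*(g*r/p) - l1*(k*r/q) = l3*r" using assms(1-3) by (simp add: field_simps)
  then have "D*m - l2*(g*r/p) - l1*(k*r/q) - l3*a*m2 = l3*r - l3*a*m2" by simp
  also have "l3*r - l3*a*m2 = l3*(1-a)" unfolding assms(4) by (simp add: algebra_simps)
  finally show ?thesis .
qed

lemma row_alg2:
  fixes p q D m g k l1 l2 l3 r a m2 b m1 :: real
  assumes "p \<noteq> 0" "q \<noteq> 0" "D*m = (l2*g/p + l1*k/q + l3)*r" "r = (1-b)+b*m1"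
  shows "-l3*b*m1 + D*m - l2*(g*r/p) - l1*(k*r/q) = l3*(1-b)"
proof -
  have "D*m - l2*(g*r/p) - l1*(k*r/q) = l3*r" using assms(1-3) by (simp add: field_simps)
  then have "-l3*b*m1 + D*m - l2*(g*r/p) - l1*(k*r/q) = l3*r - l3*b*m1" by simp
  also have "l3*r - l3*b*m1 = l3*(1-b)" unfolding assms(4) by (simp add: algebra_simps)
  finally show ?thesis .
qed

lemma H_closed:
  fixes l1 l2 l3 w1 w2 w3 a b t1 t2 :: real
  assumes pos: "l1 > 0" "l2 > 0" "l3 \<ge> 0" "w1 > 0" "w2 > 0" "w3 \<ge> 0"
    and tb: "t1 < l1" "t1 < w1" "t2 < l2" "t2 < w2"
    and L1: "L1 = Lf l1 l2 l3 t1 t2" and L2: "L2 = Lf w1 w2 w3 t1 t2"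
    and q: "a*b*L1*L2 \<noteq> 1"
  shows "mmpp_H l1 l2 l3 w1 w2 w3 a b t1 t2 =
     phi1 a b * (L1*((1-a) + a*L2*(1-b))/(1-a*b*L1*L2)) + phi2 a b * (L2*((1-b) + b*L1*(1-a))/(1-a*b*L1*L2))"
proof -
  define Mt where "Mt = - Delta (mmpp_R *v (\<chi> i. if i = 0 then t1 else t2)) - mmpp_D0 l1 l2 l3 w1 w2 w3 a b"
  define m1 where "m1 = L1*((1-a) + a*L2*(1-b))/(1-a*b*L1*L2)"
  define m2 where "m2 = L2*((1-b) + b*L1*(1-a))/(1-a*b*L1*L2)"
  have d: "l1+l3-t1 > 0" "l2+l3-t2 > 0" "l1+l2+l3-t1-t2 > 0"
          "w1+w3-t1 > 0" "w2+w3-t2 > 0" "w1+w2+w3-t1-t2 > 0" using pos tb by auto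
  have qq: "1 - a*b*L1*L2 \<noteq> 0" using q by auto
  have L1e: "(l1+l2+l3-t1-t2) * L1 = l2*(l1+l3)/(l1+l3-t1) + l1*(l2+l3)/(l2+l3-t2) + l3"
    using d unfolding L1 Lf_def by (simp add: field_simps)
  have L2e: "(w1+w2+w3-t1-t2) * L2 = w2*(w1+w3)/(w1+w3-t1) + w1*(w2+w3)/(w2+w3-t2) + w3"
    using d unfolding L2 Lf_def by (simp add: field_simps)
  have ker: "\<forall>x. Mt *v x = 0 \<longrightarrow> x = 0"
  proof (intro allI impI)
    fix x assume "Mt *v x = 0"
    then have e: "vec6 [(l1+l2+l3-t1-t2)*x$0 - l2*x$1 - l1*x$2 - l3*a*x$3,
                         (l1+l3-t1)*x$1 - (l1+l3)*a*x$3,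
                         (l2+l3-t2)*x$2 - (l2+l3)*a*x$3,
                         -w3*b*x$0 + (w1+w2+w3-t1-t2)*x$3 - w2*x$4 - w1*x$5,
                         -(w1+w3)*b*x$0 + (w1+w3-t1)*x$4,
                         -(w2+w3)*b*x$0 + (w2+w3-t2)*x$5] = 0"
      unfolding Mt_def Mt_entries .
    have e0: "(l1+l2+l3-t1-t2)*x$0 - l2*x$1 - l1*x$2 - l3*a*x$3 = 0" using arg_cong[OF e, of "\<lambda>v. v$0"] by (simp add: vec6_nth)
    have e1: "(l1+l3-t1)*x$1 - (l1+l3)*a*x$3 = 0" using arg_cong[OF e, of "\<lambda>v. v$1"] by (simp add: vec6_nth)
    have e2: "(l2+l3-t2)*x$2 - (l2+l3)*a*x$3 = 0" using arg_cong[OF e, of "\<lambda>v. v$2"] by (simp add: vec6_nth)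
    have e3: "-w3*b*x$0 + (w1+w2+w3-t1-t2)*x$3 - w2*x$4 - w1*x$5 = 0" using arg_cong[OF e, of "\<lambda>v. v$3"] by (simp add: vec6_nth)
    have e4: "-(w1+w3)*b*x$0 + (w1+w3-t1)*x$4 = 0" using arg_cong[OF e, of "\<lambda>v. v$4"] by (simp add: vec6_nth)
    have e5: "-(w2+w3)*b*x$0 + (w2+w3-t2)*x$5 = 0" using arg_cong[OF e, of "\<lambda>v. v$5"] by (simp add: vec6_nth)
    have x1: "x$1 = (l1+l3)*a*x$3/(l1+l3-t1)" using e1 d by (simp add: field_simps)
    have x2: "x$2 = (l2+l3)*a*x$3/(l2+l3-t2)" using e2 d by (simp add: field_simps)
    have x4: "x$4 = (w1+w3)*b*x$0/(w1+w3-t1)" using e4 d by (simp add: field_simps)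
    have x5: "x$5 = (w2+w3)*b*x$0/(w2+w3-t2)" using e5 d by (simp add: field_simps)
    have "(l1+l2+l3-t1-t2)*x$0 = (l1+l2+l3-t1-t2) * L1 * a * x$3"
      using e0 unfolding L1e x1 x2 by (simp add: field_simps)
    then have x0: "x$0 = L1*a*x$3" using d by simp
    have "(w1+w2+w3-t1-t2)*x$3 = (w1+w2+w3-t1-t2) * L2 * b * x$0"
      using e3 unfolding L2e x4 x5 by (simp add: field_simps)
    then have x3: "x$3 = L2*b*x$0" using d by simp
    have "x$0 * (1 - a*b*L1*L2) = 0" using x0 x3 by (simp add: algebra_simps)
    then have z0: "x$0 = 0" using qq by simp
    then have z3: "x$3 = 0" using x3 by simp
    show "x = 0"
      by (rule vec6_eqI) (simp_all add: z0 z3 x1 x2 x4 x5)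
  qed
  have inv: "invertible Mt"
    using ker unfolding invertible_left_inverse matrix_left_invertible_ker[symmetric] .
  define xs where "xs = vec6 [m1, (l1+l3)*((1-a)+a*m2)/(l1+l3-t1), (l2+l3)*((1-a)+a*m2)/(l2+l3-t2),
                     m2, (w1+w3)*((1-b)+b*m1)/(w1+w3-t1), (w2+w3)*((1-b)+b*m1)/(w2+w3-t2)]"
  have m1e: "m1 = L1*((1-a)+a*m2)" unfolding m1_def m2_def using qq by (simp add: field_simps)
  have m2e: "m2 = L2*((1-b)+b*m1)" unfolding m1_def m2_def using qq by (simp add: field_simps)
  have sol: "Mt *v xs = mmpp_D1 l1 l2 l3 w1 w2 w3 a b *v ones"
    unfolding Mt_def Mt_entries D1_ones
  proof (rule vec6_eqI)
    show "vec6 [(l1+l2+l3-t1-t2)*xs$0 - l2*xs$1 - l1*xs$2 - l3*a*xs$3,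
                         (l1+l3-t1)*xs$1 - (l1+l3)*a*xs$3,
                         (l2+l3-t2)*xs$2 - (l2+l3)*a*xs$3,
                         -w3*b*xs$0 + (w1+w2+w3-t1-t2)*xs$3 - w2*xs$4 - w1*xs$5,
                         -(w1+w3)*b*xs$0 + (w1+w3-t1)*xs$4,
                         -(w2+w3)*b*xs$0 + (w2+w3-t2)*xs$5] $ 0 = vec6 [l3*(1-a), (l1+l3)*(1-a), (l2+l3)*(1-a),
     w3*(1-b), (w1+w3)*(1-b), (w2+w3)*(1-b)] $ 0"
    proof -
      have r0: "(l1+l2+l3-t1-t2)*m1 = (l2*(l1+l3)/(l1+l3-t1) + l1*(l2+l3)/(l2+l3-t2) + l3)*((1-a)+a*m2)"
        by (subst m1e) (metis L1e mult.assoc)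
      have "(l1+l2+l3-t1-t2)*m1 - l2*((l1+l3)*((1-a)+a*m2)/(l1+l3-t1)) - l1*((l2+l3)*((1-a)+a*m2)/(l2+l3-t2)) - l3*a*m2 = l3*(1-a)"
        using row_alg[OF _ _ r0 refl] d by simp
      then show ?thesis by (simp add: vec6_nth xs_def)
    qed
  next
    show "vec6 [(l1+l2+l3-t1-t2)*xs$0 - l2*xs$1 - l1*xs$2 - l3*a*xs$3,
                         (l1+l3-t1)*xs$1 - (l1+l3)*a*xs$3,
                         (l2+l3-t2)*xs$2 - (l2+l3)*a*xs$3,
                         -w3*b*xs$0 + (w1+w2+w3-t1-t2)*xs$3 - w2*xs$4 - w1*xs$5,
                         -(w1+w3)*b*xs$0 + (w1+w3-t1)*xs$4,
                         -(w2+w3)*b*xs$0 + (w2+w3-t2)*xs$5] $ 3 = vec6 [l3*(1-a), (l1+l3)*(1-a), (l2+l3)*(1-a),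
     w3*(1-b), (w1+w3)*(1-b), (w2+w3)*(1-b)] $ 3"
    proof -
      have r0: "(w1+w2+w3-t1-t2)*m2 = (w2*(w1+w3)/(w1+w3-t1) + w1*(w2+w3)/(w2+w3-t2) + w3)*((1-b)+b*m1)"
        by (subst m2e) (metis L2e mult.assoc)
      have "-w3*b*m1 + (w1+w2+w3-t1-t2)*m2 - w2*((w1+w3)*((1-b)+b*m1)/(w1+w3-t1)) - w1*((w2+w3)*((1-b)+b*m1)/(w2+w3-t2)) = w3*(1-b)"
        using row_alg2[OF _ _ r0 refl] d by simp
      then show ?thesis by (simp add: vec6_nth xs_def)
    qed
  qed (use d in \<open>simp_all add: vec6_nth xs_def field_simps\<close>)
  have "matrix_inv Mt *v (mmpp_D1 l1 l2 l3 w1 w2 w3 a b *v ones) = xs"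
    unfolding sol[symmetric] matrix_vector_mul_assoc matrix_inv_left'[OF inv] by simp
  then have "mmpp_H l1 l2 l3 w1 w2 w3 a b t1 t2 = mmpp_phi a b \<bullet> xs"
    unfolding mmpp_H_def Let_def dot_lmul_matrix Mt_def by simp
  also have "\<dots> = phi1 a b * m1 + phi2 a b * m2"
    by (simp add: inner_vec_def sum6 mmpp_phi_def vec6_nth xs_def)
  finally show ?thesis unfolding m1_def m2_def .
qed




lemma state_meas:
  assumes s0: "s0 \<in> measurable M (count_space UNIV)"
    and C: "\<And>s j. C s j \<in> measurable M (count_space UNIV)"
  shows "(\<lambda>w. mmpp_state C s0 w j) \<in> measurable M (count_space UNIV)"
proof (induction j)
  case 0
  then show ?case using s0 by simp
next
  case (Suc j)
  have "(\<lambda>w. (\<lambda>s w. if C s j w then 3 - s else s) (mmpp_state C s0 w j) w) \<in> measurable M (count_space UNIV)"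
  proof (rule measurable_compose_countable[OF _ Suc.IH])
    fix s :: nat
    have [measurable]: "C s j \<in> measurable M (count_space UNIV)" by (rule C)
    show "(\<lambda>w. if C s j w then 3 - s else s) \<in> measurable M (count_space UNIV)" by measurable
  qed
  then show ?case by (simp add: Let_def)
qed

lemma TK_meas:
  assumes s0: "s0 \<in> measurable M (count_space UNIV)"
    and C: "\<And>s j. C s j \<in> measurable M (count_space UNIV)"
    and Z: "\<And>s j. Z s j \<in> borel_measurable M"
  shows "first_TK Z C s0 \<in> borel_measurable M"
proof -
  have st: "(\<lambda>w. mmpp_state C s0 w j) \<in> measurable M (count_space UNIV)" for j
    by (rule state_meas[OF s0 C])
  have ff: "first_failure C s0 \<in> measurable M (count_space UNIV)"
    unfolding first_failure_def[abs_def]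
  proof (rule measurable_Least)
    fix i :: nat
    have "(\<lambda>w. (\<lambda>s w. \<not> C s i w) (mmpp_state C s0 w i) w) \<in> measurable M (count_space UNIV)"
    proof (rule measurable_compose_countable[OF _ st])
      fix s :: nat
      have [measurable]: "C s i \<in> measurable M (count_space UNIV)" by (rule C)
      show "(\<lambda>w. \<not> C s i w) \<in> measurable M (count_space UNIV)" by measurable
    qed
    then show "(\<lambda>w. \<not> C (mmpp_state C s0 w i) i w) \<in> measurable M (count_space UNIV)" by simp
  qed
  have zj: "(\<lambda>w. Z (mmpp_state C s0 w j) j w) \<in> borel_measurable M" for j
    by (rule measurable_compose_countable[OF _ st]) (rule Z)
  have "(\<lambda>w. (\<lambda>n w. \<Sum>j\<le>n. Z (mmpp_state C s0 w j) j w) (first_failure C s0 w) w) \<in> borel_measurable M"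
  proof (rule measurable_compose_countable[OF _ ff])
    fix n :: nat
    show "(\<lambda>w. \<Sum>j\<le>n. Z (mmpp_state C s0 w j) j w) \<in> borel_measurable M"
      by (rule borel_measurable_sum) (rule zj)
  qed
  then show ?thesis unfolding first_TK_def[abs_def] by simp
qed




definition spath :: "nat \<Rightarrow> nat \<Rightarrow> nat" where
  "spath s j = (if even j then s else 3 - s)"

lemma spath_Suc: "s \<in> {1,2} \<Longrightarrow> spath s (Suc j) = 3 - spath s j"
  by (auto simp: spath_def)

lemma spath_in: "s \<in> {1,2} \<Longrightarrow> spath s j \<in> {1,2}"
  by (auto simp: spath_def)

lemma state_path:
  assumes "sz w = s" "s \<in> {1,2}" "\<forall>j<n. C (spath s j) j w" "j \<le> n"
  shows "mmpp_state C sz w j = spath s j"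
  using assms(4)
proof (induction j)
  case 0
  then show ?case using assms(1) by (simp add: spath_def)
next
  case (Suc j)
  then have "mmpp_state C sz w j = spath s j" by simp
  moreover have "C (spath s j) j w" using assms(3) Suc.prems by simp
  ultimately show ?case using spath_Suc[OF assms(2)] by (simp add: Let_def)
qed

lemma ff_eq:
  assumes "sz w = s" "s \<in> {1,2}" "\<forall>j<n. C (spath s j) j w" "\<not> C (spath s n) n w"
  shows "first_failure C sz w = n"
  unfolding first_failure_def
proof (rule Least_equality)
  show "\<not> C (mmpp_state C sz w n) n w" using state_path[where sz=sz and w=w and s=s and n=n and C=C, OF assms(1-3), of n] assms(4) by simp
  fix y assume "\<not> C (mmpp_state C sz w y) y w"
  then show "n \<le> y"
    using state_path[where sz=sz and w=w and s=s and n=n and C=C, OF assms(1-3), of y] assms(3) by (metis less_imp_le_nat not_le)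
qed

lemma TK_eq:
  assumes "sz w = s" "s \<in> {1,2}" "\<forall>j<n. C (spath s j) j w" "\<not> C (spath s n) n w"
  shows "first_TK Z C sz w = (\<Sum>j\<le>n. Z (spath s j) j w)"
  unfolding first_TK_def ff_eq[where sz=sz and w=w and s=s and n=n and C=C, OF assms]
  by (rule sum.cong) (use state_path[where sz=sz and w=w and s=s and n=n and C=C, OF assms(1-3)] in auto)

lemma prodI:
  fixes F :: "mmpp_index \<Rightarrow> 'b::comm_monoid_mult"
  shows "prod F (insert Init ((\<lambda>j. Incr (spath s j) j) ` {..n} \<union> (\<lambda>j. Coin (spath s j) j) ` {..n}))
    = F Init * (\<Prod>j\<le>n. F (Incr (spath s j) j)) * (\<Prod>j\<le>n. F (Coin (spath s j) j))"
proof -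
  have inj1: "inj_on (\<lambda>j. Incr (spath s j) j) {..n}" by (auto simp: inj_on_def)
  have inj2: "inj_on (\<lambda>j. Coin (spath s j) j) {..n}" by (auto simp: inj_on_def)
  have "prod F (insert Init ((\<lambda>j. Incr (spath s j) j) ` {..n} \<union> (\<lambda>j. Coin (spath s j) j) ` {..n}))
     = F Init * prod F ((\<lambda>j. Incr (spath s j) j) ` {..n} \<union> (\<lambda>j. Coin (spath s j) j) ` {..n})"
    by (rule prod.insert) auto
  also have "prod F ((\<lambda>j. Incr (spath s j) j) ` {..n} \<union> (\<lambda>j. Coin (spath s j) j) ` {..n})
     = prod F ((\<lambda>j. Incr (spath s j) j) ` {..n}) * prod F ((\<lambda>j. Coin (spath s j) j) ` {..n})"
    by (rule prod.union_disjoint) auto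
  also have "prod F ((\<lambda>j. Incr (spath s j) j) ` {..n}) = (\<Prod>j\<le>n. F (Incr (spath s j) j))"
    using prod.reindex[OF inj1] by simp
  also have "prod F ((\<lambda>j. Coin (spath s j) j) ` {..n}) = (\<Prod>j\<le>n. F (Coin (spath s j) j))"
    using prod.reindex[OF inj2] by simp
  finally show ?thesis by (simp add: mult.assoc)
qed

lemma Lf_pos:
  assumes "m1 > 0" "m2 > 0" "m3 \<ge> 0" "t1 < m1" "t2 < m2"
  shows "Lf m1 m2 m3 t1 t2 > 0"
  unfolding Lf_def using assms
  by (intro divide_pos_pos add_pos_nonneg add_pos_pos mult_pos_pos) auto

lemma sums_pairs:
  fixes f :: "nat \<Rightarrow> real"
  assumes nn: "\<And>n. 0 \<le> f n" and S: "(\<lambda>k. f (2*k) + f (2*k+1)) sums S"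
  shows "f sums S"
proof -
  define P where "P n = (\<Sum>i<n. f i)" for n
  have P2: "P (2*k) = (\<Sum>i<k. f (2*i) + f (2*i+1))" for k
    by (induction k) (simp_all add: P_def)
  have ev: "(\<lambda>k. P (2*k)) \<longlonglongrightarrow> S" using S unfolding sums_def P2 .
  have pz: "(\<lambda>k. f (2*k) + f (2*k+1)) \<longlonglongrightarrow> 0" using S summable_LIMSEQ_zero sums_summable by blast
  have f0: "(\<lambda>k. f (2*k)) \<longlonglongrightarrow> 0"
    by (rule tendsto_sandwich[where f="\<lambda>_. 0" and h="\<lambda>k. f (2*k) + f (2*k+1)"]) (use nn pz in auto)
  have od: "(\<lambda>k. P (2*k+1)) \<longlonglongrightarrow> S"
  proof -
    have "(\<lambda>k. P (2*k) + f (2*k)) \<longlonglongrightarrow> S + 0" by (intro tendsto_add ev f0)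
    moreover have "P (2*k+1) = P (2*k) + f (2*k)" for k by (simp add: P_def)
    ultimately show ?thesis by simp
  qed
  have "P \<longlonglongrightarrow> S" by (rule limseq_even_odd[OF ev od])
  then show ?thesis unfolding sums_def P_def .
qed

locale mmpp = prob_space M for M :: "'a measure" +
  fixes l1 l2 l3 w1 w2 w3 a b :: real
    and s0 :: "'a \<Rightarrow> nat"
    and Z :: "nat \<Rightarrow> nat \<Rightarrow> 'a \<Rightarrow> real \<times> real"
    and C :: "nat \<Rightarrow> nat \<Rightarrow> 'a \<Rightarrow> bool"
  assumes pos: "l1 > 0" "l2 > 0" "l3 \<ge> 0" "w1 > 0" "w2 > 0" "w3 \<ge> 0"
    and ab: "0 \<le> a" "a \<le> 1" "0 \<le> b" "b \<le> 1"
    and den: "b * (1 - a) + a * (1 - b) \<noteq> 0"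
    and s0m: "s0 \<in> measurable M (count_space UNIV)"
    and Zm: "\<And>s j. Z s j \<in> borel_measurable M"
    and Cm: "\<And>s j. C s j \<in> measurable M (count_space UNIV)"
    and s012: "\<forall>w\<in>space M. s0 w \<in> {1, 2}"
    and ps0: "measure M {w \<in> space M. s0 w = 1} = phi1 a b"
    and Z1: "\<And>j x y. 0 \<le> x \<Longrightarrow> 0 \<le> y \<Longrightarrow>
           measure M {w \<in> space M. x < fst (Z 1 j w) \<and> y < snd (Z 1 j w)} = BVE_surv l1 l2 l3 x y"
    and Z2: "\<And>j x y. 0 \<le> x \<Longrightarrow> 0 \<le> y \<Longrightarrow>
           measure M {w \<in> space M. x < fst (Z 2 j w) \<and> y < snd (Z 2 j w)} = BVE_surv w1 w2 w3 x y"
    and C1: "\<And>j. measure M {w \<in> space M. C 1 j w} = a"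
    and C2: "\<And>j. measure M {w \<in> space M. C 2 j w} = b"
    and ind: "indep_sets
           (\<lambda>i. case i of
                  Init \<Rightarrow> gen_sets M s0 (count_space UNIV)
                | Incr s j \<Rightarrow> gen_sets M (Z s j) borel
                | Coin s j \<Rightarrow> gen_sets M (C s j) (count_space UNIV))
           mmpp_indices"
begin

definition pp :: "nat \<Rightarrow> real" where "pp s = (if s = 1 then a else b)"
definition LL :: "real \<Rightarrow> real \<Rightarrow> nat \<Rightarrow> real" where
  "LL t1 t2 s = (if s = 1 then Lf l1 l2 l3 t1 t2 else Lf w1 w2 w3 t1 t2)"
definition Ps :: "nat \<Rightarrow> real" where "Ps s = measure M {w \<in> space M. s0 w = s}"
definition Aev :: "nat \<Rightarrow> nat \<Rightarrow> 'a set" where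
  "Aev s n = {w \<in> space M. s0 w = s \<and> (\<forall>j\<le>n. C (spath s j) j w = (j < n))}"
definition ff :: "real \<Rightarrow> real \<Rightarrow> 'a \<Rightarrow> real" where
  "ff t1 t2 w = exp (fst (first_TK Z C s0 w) * t1 + snd (first_TK Z C s0 w) * t2)"

lemma ff_meas[measurable]: "ff t1 t2 \<in> borel_measurable M"
proof -
  have [measurable]: "first_TK Z C s0 \<in> measurable M (borel \<Otimes>\<^sub>M borel)"
    using TK_meas[OF s0m Cm Zm] by (simp add: borel_prod)
  show ?thesis unfolding ff_def[abs_def] by measurable
qed

lemma Zpair[measurable]: "Z s j \<in> measurable M (borel \<Otimes>\<^sub>M borel)"
  using Zm by (simp add: borel_prod)

lemma Zfst[measurable]: "(\<lambda>w. fst (Z s j w)) \<in> borel_measurable M"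
  by measurable

lemma Zsnd[measurable]: "(\<lambda>w. snd (Z s j w)) \<in> borel_measurable M"
  by measurable

lemma mgf_Z:
  assumes "s \<in> {1,2}" "t1 < l1" "t1 < w1" "t2 < l2" "t2 < w2"
  shows "(\<integral>\<^sup>+w. ennreal (exp (t1 * fst (Z s j w) + t2 * snd (Z s j w))) \<partial>M) = ennreal (LL t1 t2 s)"
proof -
  have [measurable]: "Z s j \<in> borel_measurable M" by (rule Zm)
  show ?thesis
  proof (cases "s = 1")
    case True
    show ?thesis unfolding True LL_def
      by (simp, rule mgf_MO) (use Z1 pos assms Zfst Zsnd in auto)
  next
    case False
    then have s2: "s = 2" using assms by auto
    show ?thesis unfolding s2 LL_def
      by (simp, rule mgf_MO) (use Z2 pos assms Zfst Zsnd in auto)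
  qed
qed

lemma ff_prod:
  assumes "w \<in> Aev s n" "s \<in> {1,2}"
  shows "ff t1 t2 w = (\<Prod>j\<le>n. exp (t1 * fst (Z (spath s j) j w) + t2 * snd (Z (spath s j) j w)))"
proof -
  have h: "s0 w = s" "\<forall>j<n. C (spath s j) j w" "\<not> C (spath s n) n w" using assms(1) by (auto simp: Aev_def)
  have "first_TK Z C s0 w = (\<Sum>j\<le>n. Z (spath s j) j w)" by (rule TK_eq[where sz=s0 and w=w and s=s and n=n and C=C, OF h(1) assms(2) h(2,3)])
  then have "fst (first_TK Z C s0 w) * t1 + snd (first_TK Z C s0 w) * t2
      = (\<Sum>j\<le>n. t1 * fst (Z (spath s j) j w) + t2 * snd (Z (spath s j) j w))"
    by (simp add: fst_sum snd_sum sum.distrib sum_distrib_left sum_distrib_right mult.commute)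
  then show ?thesis unfolding ff_def by (simp add: exp_sum)
qed

lemma piece:
  assumes s: "s \<in> {1,2}" and t: "t1 < l1" "t1 < w1" "t2 < l2" "t2 < w2"
  shows "(\<integral>\<^sup>+w. indicator (Aev s n) w * ennreal (ff t1 t2 w) \<partial>M) =
     ennreal (Ps s * (\<Prod>j<n. pp (spath s j) * LL t1 t2 (spath s j)) * ((1 - pp (spath s n)) * LL t1 t2 (spath s n)))"
proof -
  define I where "I = insert Init ((\<lambda>j. Incr (spath s j) j) ` {..n} \<union> (\<lambda>j. Coin (spath s j) j) ` {..n})"
  define Y where "Y i w = (case i of Init \<Rightarrow> (if s0 w = s then 1 else 0)
      | Incr s' j \<Rightarrow> exp (t1 * fst (Z s' j w) + t2 * snd (Z s' j w))
      | Coin s' j \<Rightarrow> (if C s' j w = (j < n) then 1 else 0::real))" for i w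
  have Isub: "I \<subseteq> mmpp_indices"
    using spath_in[OF s] unfolding I_def mmpp_indices_def by blast
  have [measurable]: "s0 \<in> measurable M (count_space UNIV)" by (rule s0m)
  have Cm'[measurable]: "C s' j \<in> measurable M (count_space UNIV)" for s' j by (rule Cm)
  have rv: "random_variable borel (Y i)" for i
  proof (cases i)
    case Init then show ?thesis unfolding Y_def by simp
  next
    case (Incr s' j) then show ?thesis unfolding Y_def by simp
  next
    case (Coin s' j) then show ?thesis unfolding Y_def by simp
  qed
  have indep: "indep_vars (\<lambda>_. borel) Y I"
    unfolding indep_vars_def2
  proof
    show "\<forall>i\<in>I. random_variable borel (Y i)" using rv by simp
    show "indep_sets (\<lambda>i. {Y i -` A \<inter> space M |A. A \<in> sets borel}) I"
    proof (rule indep_sets_mono_sets[OF indep_sets_mono_index[OF Isub ind]])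
      fix i assume "i \<in> I"
      show "{Y i -` A \<inter> space M |A. A \<in> sets borel} \<subseteq> (case i of Init \<Rightarrow> gen_sets M s0 (count_space UNIV)
                | Incr s j \<Rightarrow> gen_sets M (Z s j) borel | Coin s j \<Rightarrow> gen_sets M (C s j) (count_space UNIV))"
      proof (cases i)
        case Init
        have "Y Init -` A \<inter> space M \<in> gen_sets M s0 (count_space UNIV)" for A :: "real set"
        proof -
          have e: "Y Init -` A \<inter> space M = s0 -` {k. (if k = s then 1 else 0::real) \<in> A} \<inter> space M"
            unfolding Y_def by auto
          show ?thesis unfolding gen_sets_def e
            by (rule CollectI, rule exI[where x="{k. (if k = s then 1 else 0::real) \<in> A}"], simp)
        qed
        then show ?thesis unfolding Init by auto
      next
        case (Incr s' j)
        define h where "h p = exp (t1 * fst p + t2 * snd p)" for p :: "real \<times> real"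
        have "h \<in> borel_measurable (borel \<Otimes>\<^sub>M borel)" unfolding h_def[abs_def] by measurable
        then have hm: "h \<in> borel_measurable borel" by (simp add: borel_prod)
        have "Y (Incr s' j) -` A \<inter> space M \<in> gen_sets M (Z s' j) borel" if A: "A \<in> sets borel" for A :: "real set"
        proof -
          have "h -` A \<inter> space borel \<in> sets borel" using measurable_sets[OF hm A] .
          then have hA: "h -` A \<in> sets borel" by simp
          have e: "Y (Incr s' j) -` A \<inter> space M = Z s' j -` (h -` A) \<inter> space M"
            unfolding Y_def h_def by auto
          show ?thesis unfolding gen_sets_def e
            by (rule CollectI, rule exI[where x="h -` A"], simp add: hA)
        qed
        then show ?thesis unfolding Incr by auto
      next
        case (Coin s' j)
        have "Y (Coin s' j) -` A \<inter> space M \<in> gen_sets M (C s' j) (count_space UNIV)" for A :: "real set"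
        proof -
          have e: "Y (Coin s' j) -` A \<inter> space M = C s' j -` {c. (if c = (j < n) then 1 else 0::real) \<in> A} \<inter> space M"
            unfolding Y_def by auto
          show ?thesis unfolding gen_sets_def e
            by (rule CollectI, rule exI[where x="{c. (if c = (j < n) then 1 else 0::real) \<in> A}"], simp)
        qed
        then show ?thesis unfolding Coin by auto
      qed
    qed
  qed
  have Ynn: "0 \<le> Y i w" for i w unfolding Y_def by (auto split: mmpp_index.split)
  have prodeq: "indicator (Aev s n) w * ennreal (ff t1 t2 w) = ennreal (\<Prod>i\<in>I. Y i w)" if w: "w \<in> space M" for w
  proof -
    have "(\<Prod>i\<in>I. Y i w) = Y Init w * (\<Prod>j\<le>n. Y (Incr (spath s j) j) w) * (\<Prod>j\<le>n. Y (Coin (spath s j) j) w)"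
      unfolding I_def by (rule prodI)
    also have "\<dots> = (if s0 w = s then 1 else 0) * (\<Prod>j\<le>n. exp (t1 * fst (Z (spath s j) j w) + t2 * snd (Z (spath s j) j w)))
        * (\<Prod>j\<le>n. if C (spath s j) j w = (j < n) then 1 else 0)"
      unfolding Y_def by simp
    finally have pe: "(\<Prod>i\<in>I. Y i w) = (if s0 w = s then 1 else 0) * (\<Prod>j\<le>n. exp (t1 * fst (Z (spath s j) j w) + t2 * snd (Z (spath s j) j w)))
        * (\<Prod>j\<le>n. if C (spath s j) j w = (j < n) then 1 else 0)" .
    show ?thesis
    proof (cases "w \<in> Aev s n")
      case True
      then have "s0 w = s" "\<forall>j\<le>n. C (spath s j) j w = (j < n)" by (auto simp: Aev_def)
      then show ?thesis using pe ff_prod[OF True s, of t1 t2] True by simp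
    next
      case False
      then have "s0 w \<noteq> s \<or> (\<exists>j\<le>n. C (spath s j) j w \<noteq> (j < n))" using w by (auto simp: Aev_def)
      then have "(\<Prod>i\<in>I. Y i w) = 0"
      proof
        assume "s0 w \<noteq> s" then show ?thesis using pe by simp
      next
        assume "\<exists>j\<le>n. C (spath s j) j w \<noteq> (j < n)"
        then obtain j where "j \<le> n" "C (spath s j) j w \<noteq> (j < n)" by blast
        then have "(\<Prod>j\<le>n. if C (spath s j) j w = (j < n) then 1 else (0::real)) = 0"
          by (intro prod_zero) auto
        then show ?thesis using pe by simp
      qed
      then show ?thesis using False by simp
    qed
  qed
  have "(\<integral>\<^sup>+w. indicator (Aev s n) w * ennreal (ff t1 t2 w) \<partial>M) = (\<integral>\<^sup>+w. ennreal (\<Prod>i\<in>I. Y i w) \<partial>M)"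
    by (rule nn_integral_cong) (use prodeq in simp)
  also have "\<dots> = (\<Prod>i\<in>I. \<integral>\<^sup>+w. ennreal (Y i w) \<partial>M)"
  proof -
    have indep': "indep_vars (\<lambda>_. borel) (\<lambda>i w. ennreal (Y i w)) I"
      by (rule indep_vars_compose2[OF indep]) simp
    have "(\<integral>\<^sup>+w. ennreal (\<Prod>i\<in>I. Y i w) \<partial>M) = (\<integral>\<^sup>+w. (\<Prod>i\<in>I. ennreal (Y i w)) \<partial>M)"
      by (rule nn_integral_cong) (simp add: prod_ennreal Ynn)
    also have "\<dots> = (\<Prod>i\<in>I. \<integral>\<^sup>+w. ennreal (Y i w) \<partial>M)"
      by (rule indep_vars_nn_integral) (use indep' in \<open>auto simp: I_def\<close>)
    finally show ?thesis .
  qed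
  also have "\<dots> = (\<integral>\<^sup>+w. ennreal (Y Init w) \<partial>M) * (\<Prod>j\<le>n. \<integral>\<^sup>+w. ennreal (Y (Incr (spath s j) j) w) \<partial>M)
      * (\<Prod>j\<le>n. \<integral>\<^sup>+w. ennreal (Y (Coin (spath s j) j) w) \<partial>M)"
    unfolding I_def by (rule prodI)
  also have "(\<integral>\<^sup>+w. ennreal (Y Init w) \<partial>M) = ennreal (Ps s)"
  proof -
    have "(\<integral>\<^sup>+w. ennreal (Y Init w) \<partial>M) = (\<integral>\<^sup>+w. indicator {w\<in>space M. s0 w = s} w \<partial>M)"
      by (rule nn_integral_cong) (auto simp: Y_def indicator_def)
    also have "\<dots> = emeasure M {w\<in>space M. s0 w = s}" by (rule nn_integral_indicator) measurable
    finally show ?thesis by (simp add: Ps_def emeasure_eq_measure)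
  qed
  also have "(\<Prod>j\<le>n. \<integral>\<^sup>+w. ennreal (Y (Incr (spath s j) j) w) \<partial>M) = (\<Prod>j\<le>n. ennreal (LL t1 t2 (spath s j)))"
    by (rule prod.cong) (use mgf_Z[OF spath_in[OF s] t] in \<open>auto simp: Y_def\<close>)
  also have "(\<Prod>j\<le>n. \<integral>\<^sup>+w. ennreal (Y (Coin (spath s j) j) w) \<partial>M)
      = (\<Prod>j\<le>n. ennreal (if j < n then pp (spath s j) else 1 - pp (spath s j)))"
  proof (rule prod.cong)
    fix j assume "j \<in> {..n}"
    have sp: "spath s j \<in> {1,2}" by (rule spath_in[OF s])
    have pC: "prob {w\<in>space M. C (spath s j) j w} = pp (spath s j)"
      using sp C1 C2 by (auto simp: pp_def)
    have "(\<integral>\<^sup>+w. ennreal (Y (Coin (spath s j) j) w) \<partial>M) = (\<integral>\<^sup>+w. indicator {w\<in>space M. C (spath s j) j w = (j < n)} w \<partial>M)"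
      by (rule nn_integral_cong) (auto simp: Y_def indicator_def)
    also have "\<dots> = emeasure M {w\<in>space M. C (spath s j) j w = (j < n)}" by (rule nn_integral_indicator) measurable
    also have "\<dots> = ennreal (if j < n then pp (spath s j) else 1 - pp (spath s j))"
    proof (cases "j < n")
      case True
      then show ?thesis using pC by (simp add: emeasure_eq_measure)
    next
      case False
      have "{w\<in>space M. C (spath s j) j w = (j < n)} = space M - {w\<in>space M. C (spath s j) j w}"
        using False by auto
      moreover have "prob (space M - {w\<in>space M. C (spath s j) j w}) = 1 - prob {w\<in>space M. C (spath s j) j w}"
        by (rule prob_compl) measurable
      ultimately show ?thesis using False pC by (simp add: emeasure_eq_measure)
    qed
    finally show "(\<integral>\<^sup>+w. ennreal (Y (Coin (spath s j) j) w) \<partial>M) = ennreal (if j < n then pp (spath s j) else 1 - pp (spath s j))" .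
  qed simp
  finally have eq: "(\<integral>\<^sup>+w. indicator (Aev s n) w * ennreal (ff t1 t2 w) \<partial>M) =
     ennreal (Ps s) * (\<Prod>j\<le>n. ennreal (LL t1 t2 (spath s j))) * (\<Prod>j\<le>n. ennreal (if j < n then pp (spath s j) else 1 - pp (spath s j)))" .
  have ppr: "0 \<le> pp s'" "pp s' \<le> 1" for s' using ab by (auto simp: pp_def)
  have LLnn: "0 \<le> LL t1 t2 s'" for s'
    using Lf_pos[of l1 l2 l3 t1 t2] Lf_pos[of w1 w2 w3 t1 t2] pos t by (auto simp: LL_def less_imp_le)
  have c1: "ennreal (Ps s) * (\<Prod>j\<le>n. ennreal (LL t1 t2 (spath s j))) * (\<Prod>j\<le>n. ennreal (if j < n then pp (spath s j) else 1 - pp (spath s j)))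
     = ennreal (Ps s * (\<Prod>j\<le>n. LL t1 t2 (spath s j)) * (\<Prod>j\<le>n. if j < n then pp (spath s j) else 1 - pp (spath s j)))"
    using ppr LLnn by (simp add: prod_ennreal ennreal_mult prod_nonneg Ps_def)
  have c2: "(\<Prod>j\<le>n. LL t1 t2 (spath s j)) * (\<Prod>j\<le>n. if j < n then pp (spath s j) else 1 - pp (spath s j))
     = (\<Prod>j<n. pp (spath s j) * LL t1 t2 (spath s j)) * ((1 - pp (spath s n)) * LL t1 t2 (spath s n))"
  proof -
    have a1: "(\<Prod>j\<le>n. LL t1 t2 (spath s j)) = (\<Prod>j<n. LL t1 t2 (spath s j)) * LL t1 t2 (spath s n)"
      unfolding lessThan_Suc_atMost[symmetric] by (rule prod.lessThan_Suc)
    have "(\<Prod>j\<le>n. if j < n then pp (spath s j) else 1 - pp (spath s j))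
        = (\<Prod>j<n. if j < n then pp (spath s j) else 1 - pp (spath s j)) * (1 - pp (spath s n))"
      unfolding lessThan_Suc_atMost[symmetric] by (subst prod.lessThan_Suc) simp
    also have "(\<Prod>j<n. if j < n then pp (spath s j) else 1 - pp (spath s j)) = (\<Prod>j<n. pp (spath s j))"
      by (rule prod.cong) auto
    finally have a2: "(\<Prod>j\<le>n. if j < n then pp (spath s j) else 1 - pp (spath s j)) = (\<Prod>j<n. pp (spath s j)) * (1 - pp (spath s n))" .
    have a3: "(\<Prod>j<n. pp (spath s j) * LL t1 t2 (spath s j)) = (\<Prod>j<n. pp (spath s j)) * (\<Prod>j<n. LL t1 t2 (spath s j))"
      by (rule prod.distrib)
    show ?thesis unfolding a1 a2 a3 by (simp only: mult_ac)
  qed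
  show ?thesis unfolding eq c1 by (simp only: mult.assoc c2)
qed

lemma pp_range: "0 \<le> pp s'" "pp s' \<le> 1" using ab by (auto simp: pp_def)

lemma LL_nn:
  assumes "t1 < l1" "t1 < w1" "t2 < l2" "t2 < w2"
  shows "0 \<le> LL t1 t2 s'"
  using Lf_pos[of l1 l2 l3 t1 t2] Lf_pos[of w1 w2 w3 t1 t2] pos assms by (auto simp: LL_def less_imp_le)

lemma Ps_nn: "0 \<le> Ps s" by (simp add: Ps_def)

lemma series:
  assumes s: "s \<in> {1,2}" and t: "t1 < l1" "t1 < w1" "t2 < l2" "t2 < w2"
    and q: "pp s * LL t1 t2 s * (pp (3-s) * LL t1 t2 (3-s)) < 1"
  shows "(\<lambda>n. Ps s * (\<Prod>j<n. pp (spath s j) * LL t1 t2 (spath s j)) * ((1 - pp (spath s n)) * LL t1 t2 (spath s n))) sums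
     (Ps s * ((1 - pp s) * LL t1 t2 s + pp s * LL t1 t2 s * ((1 - pp (3-s)) * LL t1 t2 (3-s))) * (1 / (1 - pp s * LL t1 t2 s * (pp (3-s) * LL t1 t2 (3-s)))))"
    (is "?T sums _")
proof -
  define h where "h j = pp j * LL t1 t2 j" for j
  define Q where "Q = h s * h (3-s)"
  have hnn: "0 \<le> h j" for j unfolding h_def using pp_range LL_nn[OF t] by simp
  have Qnn: "0 \<le> Q" unfolding Q_def using hnn by simp
  have Q1: "Q < 1" using q unfolding Q_def h_def .
  have sp_ev: "spath s (2*k) = s" for k by (simp add: spath_def)
  have sp_od: "spath s (2*k+1) = 3 - s" for k by (simp add: spath_def)
  have pe: "(\<Prod>j<2*k. h (spath s j)) = Q^k" for k
  proof (induction k)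
    case 0 then show ?case by simp
  next
    case (Suc k)
    have "(\<Prod>j<2*Suc k. h (spath s j)) = (\<Prod>j<Suc (Suc (2*k)). h (spath s j))" by simp
    also have "\<dots> = (\<Prod>j<2*k. h (spath s j)) * h (spath s (2*k)) * h (spath s (2*k+1))"
      by (simp add: mult.assoc)
    also have "\<dots> = Q^k * Q" using Suc.IH sp_ev sp_od by (simp add: Q_def mult.assoc)
    finally show ?case by simp
  qed
  define c where "c = (1 - pp s) * LL t1 t2 s + pp s * LL t1 t2 s * ((1 - pp (3-s)) * LL t1 t2 (3-s))"
  have pair: "?T (2*k) + ?T (2*k+1) = (Ps s * c) * Q^k" for k
  proof -
    have "?T (2*k) = Ps s * Q^k * ((1 - pp s) * LL t1 t2 s)"
      using pe[of k] sp_ev[of k] by (simp add: h_def)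
    moreover have "?T (2*k+1) = Ps s * (Q^k * h s) * ((1 - pp (3-s)) * LL t1 t2 (3-s))"
    proof -
      have "(\<Prod>j<2*k+1. pp (spath s j) * LL t1 t2 (spath s j)) = (\<Prod>j<2*k. h (spath s j)) * h (spath s (2*k))"
        by (simp add: h_def)
      then show ?thesis using pe[of k] sp_ev[of k] sp_od[of k] by simp
    qed
    ultimately show ?thesis unfolding c_def h_def by (simp add: algebra_simps)
  qed
  have g: "(\<lambda>k. (Ps s * c) * Q^k) sums ((Ps s * c) * (1 / (1 - Q)))"
    by (rule sums_mult) (use geometric_sums[of Q] Qnn Q1 in simp)
  have "?T sums ((Ps s * c) * (1 / (1 - Q)))"
  proof (rule sums_pairs)
    fix n show "0 \<le> ?T n"
      using Ps_nn hnn pp_range LL_nn[OF t]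
      by (intro mult_nonneg_nonneg prod_nonneg) (auto simp: h_def[symmetric])
    show "(\<lambda>k. ?T (2*k) + ?T (2*k+1)) sums ((Ps s * c) * (1 / (1 - Q)))"
      unfolding pair by (rule g)
  qed
  then show ?thesis unfolding c_def Q_def h_def by simp
qed

definition Vs :: "real \<Rightarrow> real \<Rightarrow> nat \<Rightarrow> real" where
  "Vs t1 t2 s = Ps s * ((1 - pp s) * LL t1 t2 s + pp s * LL t1 t2 s * ((1 - pp (3-s)) * LL t1 t2 (3-s))) * (1 / (1 - pp s * LL t1 t2 s * (pp (3-s) * LL t1 t2 (3-s))))"

lemma Aev_sets[measurable]: "Aev s n \<in> sets M"
proof -
  have [measurable]: "s0 \<in> measurable M (count_space UNIV)" by (rule s0m)
  have [measurable]: "C s' j \<in> measurable M (count_space UNIV)" for s' j by (rule Cm)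
  show ?thesis unfolding Aev_def by measurable
qed

lemma Aev_disj: "disjoint_family (Aev s)"
  unfolding disjoint_family_on_def
proof (intro ballI impI)
  fix n m :: nat assume "n \<noteq> m"
  show "Aev s n \<inter> Aev s m = {}"
  proof (rule ccontr)
    assume "Aev s n \<inter> Aev s m \<noteq> {}"
    then obtain w where w: "w \<in> Aev s n" "w \<in> Aev s m" by blast
    show False
    proof (cases "n < m")
      case True
      then show False using w by (auto simp: Aev_def)
    next
      case False
      then have "m < n" using \<open>n \<noteq> m\<close> by simp
      then show False using w by (auto simp: Aev_def)
    qed
  qed
qed

lemma total:
  assumes t: "t1 < l1" "t1 < w1" "t2 < l2" "t2 < w2"
    and q: "pp 1 * LL t1 t2 1 * (pp 2 * LL t1 t2 2) < 1"
  shows "(\<integral>\<^sup>+w. ennreal (ff t1 t2 w) * indicator ((\<Union>n. Aev 1 n) \<union> (\<Union>n. Aev 2 n)) w \<partial>M)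
     = ennreal (Vs t1 t2 1 + Vs t1 t2 2)"
proof -
  define T where "T s n = Ps s * (\<Prod>j<n. pp (spath s j) * LL t1 t2 (spath s j)) * ((1 - pp (spath s n)) * LL t1 t2 (spath s n))" for s n
  have ser1: "(T 1) sums (Vs t1 t2 1)"
    unfolding T_def Vs_def using series[of 1, OF _ t] q by simp
  have ser2: "(T 2) sums (Vs t1 t2 2)"
    unfolding T_def Vs_def using series[of 2, OF _ t] q by (simp add: mult.commute)
  have Tnn: "0 \<le> T s n" for s n
    unfolding T_def using Ps_nn pp_range LL_nn[OF t]
    by (intro mult_nonneg_nonneg prod_nonneg) auto
  have Vnn: "0 \<le> Vs t1 t2 s'" if "s' \<in> {1,2}" for s'
    using that ser1 ser2 Tnn by (auto intro: sums_le[of "\<lambda>_. 0"])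
  have ind: "indicator ((\<Union>n. Aev 1 n) \<union> (\<Union>n. Aev 2 n)) w = (\<Sum>n. indicator (Aev 1 n) w) + (\<Sum>n. indicator (Aev 2 n) w :: ennreal)" for w
  proof -
    have d: "(\<Union>n. Aev 1 n) \<inter> (\<Union>n. Aev 2 n) = {}" by (auto simp: Aev_def)
    have "indicator ((\<Union>n. Aev 1 n) \<union> (\<Union>n. Aev 2 n)) w = indicator (\<Union>n. Aev 1 n) w + (indicator (\<Union>n. Aev 2 n) w :: ennreal)"
      using d by (auto simp: indicator_def)
    then show ?thesis by (simp add: suminf_indicator[OF Aev_disj])
  qed
  have "(\<integral>\<^sup>+w. ennreal (ff t1 t2 w) * indicator ((\<Union>n. Aev 1 n) \<union> (\<Union>n. Aev 2 n)) w \<partial>M)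
     = (\<integral>\<^sup>+w. (\<Sum>n. indicator (Aev 1 n) w * ennreal (ff t1 t2 w)) + (\<Sum>n. indicator (Aev 2 n) w * ennreal (ff t1 t2 w)) \<partial>M)"
    unfolding ind by (rule nn_integral_cong) (simp add: distrib_left mult.commute)
  also have "\<dots> = (\<integral>\<^sup>+w. (\<Sum>n. indicator (Aev 1 n) w * ennreal (ff t1 t2 w)) \<partial>M) + (\<integral>\<^sup>+w. (\<Sum>n. indicator (Aev 2 n) w * ennreal (ff t1 t2 w)) \<partial>M)"
    by (rule nn_integral_add) measurable
  also have "\<dots> = (\<Sum>n. \<integral>\<^sup>+w. indicator (Aev 1 n) w * ennreal (ff t1 t2 w) \<partial>M) + (\<Sum>n. \<integral>\<^sup>+w. indicator (Aev 2 n) w * ennreal (ff t1 t2 w) \<partial>M)"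
    by (subst (1 2) nn_integral_suminf) (measurable, measurable)
  also have "\<dots> = (\<Sum>n. ennreal (T 1 n)) + (\<Sum>n. ennreal (T 2 n))"
    unfolding T_def using piece[OF _ t] by simp
  also have "\<dots> = ennreal (Vs t1 t2 1) + ennreal (Vs t1 t2 2)"
    using suminf_ennreal2[OF Tnn sums_summable[OF ser1]] suminf_ennreal2[OF Tnn sums_summable[OF ser2]]
      sums_unique[OF ser1] sums_unique[OF ser2] by simp
  also have "\<dots> = ennreal (Vs t1 t2 1 + Vs t1 t2 2)" using Vnn by (simp add: ennreal_plus)
  finally show ?thesis .
qed

lemma ab_lt1: "a * b < 1"
proof (rule ccontr)
  assume "\<not> a * b < 1"
  then have "a * b \<ge> 1" by simp
  moreover have "a * b \<le> a" using ab by (simp add: mult_left_le)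
  moreover have "a * b \<le> b" using ab by (simp add: mult_le_cancel_right2 mult.commute mult_left_le)
  ultimately have "a = 1" "b = 1" using ab by auto
  then show False using den by simp
qed

lemma Ps_sum: "Ps 1 + Ps 2 = 1"
proof -
  have [measurable]: "s0 \<in> measurable M (count_space UNIV)" by (rule s0m)
  have u: "{w\<in>space M. s0 w = 1} \<union> {w\<in>space M. s0 w = 2} = space M" using s012 by auto
  have "prob ({w\<in>space M. s0 w = 1} \<union> {w\<in>space M. s0 w = 2}) = prob {w\<in>space M. s0 w = 1} + prob {w\<in>space M. s0 w = 2}"
    by (rule finite_measure_Union) auto
  then show ?thesis using u prob_space by (simp add: Ps_def)
qed

lemma Lf00: assumes "m1 > 0" "m2 > 0" "m3 \<ge> 0" shows "Lf m1 m2 m3 0 0 = 1"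
proof -
  have "m1+m3 \<noteq> 0" "m2+m3 \<noteq> 0" "m1+m2+m3 \<noteq> 0" using assms by auto
  then have "Lf m1 m2 m3 0 0 = (m2 + m1 + m3)/(m1+m2+m3)" unfolding Lf_def by simp
  also have "\<dots> = 1" using \<open>m1+m2+m3 \<noteq> 0\<close> by (simp add: add_ac)
  finally show ?thesis .
qed

lemma fullAE: "AE w in M. w \<in> (\<Union>n. Aev 1 n) \<union> (\<Union>n. Aev 2 n)"
proof -
  have LL0: "LL 0 0 s' = 1" for s' using Lf00 pos by (simp add: LL_def)
  have q: "pp 1 * LL 0 0 1 * (pp 2 * LL 0 0 2) < 1" using ab_lt1 by (simp add: LL0 pp_def)
  have t: "(0::real) < l1" "(0::real) < w1" "(0::real) < l2" "(0::real) < w2" using pos by auto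
  have ab1: "1 - a * b \<noteq> 0" using ab_lt1 by simp
  have V1: "Vs 0 0 1 = Ps 1" unfolding Vs_def LL0 pp_def using ab1 by (simp add: field_simps)
  have V2: "Vs 0 0 2 = Ps 2" unfolding Vs_def LL0 pp_def using ab1 by (simp add: field_simps)
  have [measurable]: "(\<Union>n. Aev 1 n) \<union> (\<Union>n. Aev 2 n) \<in> sets M" by measurable
  have "emeasure M ((\<Union>n. Aev 1 n) \<union> (\<Union>n. Aev 2 n)) = (\<integral>\<^sup>+w. ennreal (ff 0 0 w) * indicator ((\<Union>n. Aev 1 n) \<union> (\<Union>n. Aev 2 n)) w \<partial>M)"
    by (subst nn_integral_indicator[symmetric]) (auto simp: ff_def intro!: nn_integral_cong)
  also have "\<dots> = ennreal (Vs 0 0 1 + Vs 0 0 2)" by (rule total[OF t q])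
  also have "\<dots> = 1" unfolding V1 V2 Ps_sum by simp
  finally have "prob ((\<Union>n. Aev 1 n) \<union> (\<Union>n. Aev 2 n)) = 1" by (simp add: emeasure_eq_measure)
  then show ?thesis by (rule AE_prob_1)
qed

lemma Vs_nn:
  assumes t: "t1 < l1" "t1 < w1" "t2 < l2" "t2 < w2" and s: "s \<in> {1,2}"
    and q: "pp s * LL t1 t2 s * (pp (3-s) * LL t1 t2 (3-s)) < 1"
  shows "0 \<le> Vs t1 t2 s"
  unfolding Vs_def using Ps_nn pp_range LL_nn[OF t] q
  by (intro mult_nonneg_nonneg add_nonneg_nonneg) auto

lemma mgf_final:
  assumes t: "t1 < l1" "t1 < w1" "t2 < l2" "t2 < w2"
    and q: "a * b * LL t1 t2 1 * LL t1 t2 2 < 1"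
  shows "has_bochner_integral M (ff t1 t2) (Vs t1 t2 1 + Vs t1 t2 2)"
proof -
  have q': "pp 1 * LL t1 t2 1 * (pp 2 * LL t1 t2 2) < 1" using q by (simp add: pp_def mult_ac)
  have q'': "pp 2 * LL t1 t2 2 * (pp 1 * LL t1 t2 1) < 1" using q by (simp add: pp_def mult_ac)
  have "(\<integral>\<^sup>+w. ennreal (ff t1 t2 w) \<partial>M) = (\<integral>\<^sup>+w. ennreal (ff t1 t2 w) * indicator ((\<Union>n. Aev 1 n) \<union> (\<Union>n. Aev 2 n)) w \<partial>M)"
    by (rule nn_integral_cong_AE) (use fullAE in \<open>eventually_elim, simp\<close>)
  also have "\<dots> = ennreal (Vs t1 t2 1 + Vs t1 t2 2)" by (rule total[OF t q'])
  finally have e: "(\<integral>\<^sup>+w. ennreal (ff t1 t2 w) \<partial>M) = ennreal (Vs t1 t2 1 + Vs t1 t2 2)" .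
  show ?thesis
    by (rule has_bochner_integral_nn_integral[OF ff_meas _ _ e])
       (use Vs_nn[OF t, of 1] Vs_nn[OF t, of 2] q' q'' in \<open>auto simp: ff_def\<close>)
qed

lemma Zpos_AE:
  assumes "s \<in> {1,2}"
  shows "AE w in M. 0 < fst (Z s j w) \<and> 0 < snd (Z s j w)"
proof -
  have "prob {w\<in>space M. 0 < fst (Z s j w) \<and> 0 < snd (Z s j w)} = 1"
    using assms Z1[of 0 0 j] Z2[of 0 0 j] by (auto simp: BVE_surv_def)
  then have "AE w in M. w \<in> {w\<in>space M. 0 < fst (Z s j w) \<and> 0 < snd (Z s j w)}" by (rule AE_prob_1)
  then show ?thesis by eventually_elim auto
qed

lemma LL_mono:
  assumes s: "s \<in> {1,2}" and tK: "t1 \<le> K" "t2 \<le> K" and K: "K < l1" "K < w1" "K < l2" "K < w2"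
  shows "LL t1 t2 s \<le> LL K K s"
proof -
  have t: "t1 < l1" "t1 < w1" "t2 < l2" "t2 < w2" using tK K by auto
  have "ennreal (LL t1 t2 s) = (\<integral>\<^sup>+w. ennreal (exp (t1 * fst (Z s 0 w) + t2 * snd (Z s 0 w))) \<partial>M)"
    using mgf_Z[OF s t] by simp
  also have "\<dots> \<le> (\<integral>\<^sup>+w. ennreal (exp (K * fst (Z s 0 w) + K * snd (Z s 0 w))) \<partial>M)"
  proof (rule nn_integral_mono_AE)
    show "AE w in M. ennreal (exp (t1 * fst (Z s 0 w) + t2 * snd (Z s 0 w))) \<le> ennreal (exp (K * fst (Z s 0 w) + K * snd (Z s 0 w)))"
      using Zpos_AE[OF s, of 0]
    proof eventually_elim
      case (elim w)
      have "t1 * fst (Z s 0 w) \<le> K * fst (Z s 0 w)" using elim tK by (intro mult_right_mono) auto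
      moreover have "t2 * snd (Z s 0 w) \<le> K * snd (Z s 0 w)" using elim tK by (intro mult_right_mono) auto
      ultimately show ?case by (intro ennreal_leI) simp
    qed
  qed
  also have "\<dots> = ennreal (LL K K s)" using mgf_Z[OF s K] by simp
  finally show ?thesis using LL_nn[OF K] by (simp add: ennreal_le_iff)
qed

lemma choose_K: "\<exists>K>0. K < l1 \<and> K < w1 \<and> K < l2 \<and> K < w2 \<and> a * b * LL K K 1 * LL K K 2 < 1"
proof -
  define k where "k x = a * b * Lf l1 l2 l3 x x * Lf w1 w2 w3 x x" for x :: real
  have "isCont k 0"
    unfolding k_def Lf_def using pos by (intro continuous_intros) auto
  moreover have "k 0 < 1" unfolding k_def using Lf00 pos ab_lt1 by simp
  ultimately have "eventually (\<lambda>x. k x < 1) (at 0)"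
    using order_tendstoD(2) isCont_def by blast
  then obtain d where d: "d > 0" "\<And>x. x \<noteq> 0 \<Longrightarrow> dist x 0 < d \<Longrightarrow> k x < 1"
    unfolding eventually_at by auto
  define K where "K = min (d/2) (min (min l1 l2) (min w1 w2) / 2)"
  have K: "K > 0" "K < l1" "K < w1" "K < l2" "K < w2" "K < d" using pos d(1) by (auto simp: K_def)
  then have "k K < 1" using d(2)[of K] by simp
  then show ?thesis using K by (intro exI[of _ K]) (simp add: k_def LL_def)
qed

lemma Vs_H:
  assumes t: "t1 < l1" "t1 < w1" "t2 < l2" "t2 < w2"
    and q: "a * b * LL t1 t2 1 * LL t1 t2 2 < 1"
  shows "Vs t1 t2 1 + Vs t1 t2 2 = mmpp_H l1 l2 l3 w1 w2 w3 a b t1 t2"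
proof -
  define L1 where "L1 = Lf l1 l2 l3 t1 t2"
  define L2 where "L2 = Lf w1 w2 w3 t1 t2"
  have LL1: "LL t1 t2 1 = L1" and LL2: "LL t1 t2 2 = L2" by (simp_all add: LL_def L1_def L2_def)
  have q1: "a*b*L1*L2 \<noteq> 1" using q unfolding LL1 LL2 by simp
  have H: "mmpp_H l1 l2 l3 w1 w2 w3 a b t1 t2 =
     phi1 a b * (L1*((1-a) + a*L2*(1-b))/(1-a*b*L1*L2)) + phi2 a b * (L2*((1-b) + b*L1*(1-a))/(1-a*b*L1*L2))"
    by (rule H_closed[OF pos t L1_def L2_def q1])
  have P1: "Ps 1 = phi1 a b" using ps0 by (simp add: Ps_def)
  have P2: "Ps 2 = phi2 a b"
  proof -
    have "phi1 a b + phi2 a b = (b*(1-a) + a*(1-b))/(b*(1-a) + a*(1-b))"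
      unfolding phi1_def phi2_def by (rule add_divide_distrib[symmetric])
    then have "phi1 a b + phi2 a b = 1" using den by simp
    then show ?thesis using Ps_sum P1 by simp
  qed
  have V1: "Vs t1 t2 1 = phi1 a b * (L1*((1-a) + a*L2*(1-b))/(1-a*b*L1*L2))"
  proof -
    have "Vs t1 t2 1 = phi1 a b * ((1 - a) * L1 + a * L1 * ((1 - b) * L2)) * (1 / (1 - a * L1 * (b * L2)))"
      unfolding Vs_def P1 by (simp add: pp_def LL_def L1_def L2_def)
    also have "(1 - a) * L1 + a * L1 * ((1 - b) * L2) = L1*((1-a) + a*L2*(1-b))" by (simp add: algebra_simps)
    also have "a * L1 * (b * L2) = a*b*L1*L2" by (simp add: mult_ac)
    finally show ?thesis by simp
  qed
  have V2: "Vs t1 t2 2 = phi2 a b * (L2*((1-b) + b*L1*(1-a))/(1-a*b*L1*L2))"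
  proof -
    have "Vs t1 t2 2 = phi2 a b * ((1 - b) * L2 + b * L2 * ((1 - a) * L1)) * (1 / (1 - b * L2 * (a * L1)))"
      unfolding Vs_def P2 by (simp add: pp_def LL_def L1_def L2_def)
    also have "(1 - b) * L2 + b * L2 * ((1 - a) * L1) = L2*((1-b) + b*L1*(1-a))" by (simp add: algebra_simps)
    also have "b * L2 * (a * L1) = a*b*L1*L2" by (simp add: mult_ac)
    finally show ?thesis by simp
  qed
  show ?thesis unfolding H V1 V2 ..
qed

end

theorem proposition4:
  fixes M :: "'a measure"
    and l1 l2 l3 w1 w2 w3 a b :: real
    and s0 :: "'a \<Rightarrow> nat"
    and Z :: "nat \<Rightarrow> nat \<Rightarrow> 'a \<Rightarrow> real \<times> real"
    and C :: "nat \<Rightarrow> nat \<Rightarrow> 'a \<Rightarrow> bool"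
  assumes "prob_space M"
    and "l1 > 0" "l2 > 0" "l3 \<ge> 0" "w1 > 0" "w2 > 0" "w3 \<ge> 0"
    and "0 \<le> a" "a \<le> 1" "0 \<le> b" "b \<le> 1"
    and "b * (1 - a) + a * (1 - b) \<noteq> 0"
    and "s0 \<in> measurable M (count_space UNIV)"
    and "\<And>s j. Z s j \<in> borel_measurable M"
    and "\<And>s j. C s j \<in> measurable M (count_space UNIV)"
    and "\<forall>w\<in>space M. s0 w \<in> {1, 2}"
    and "measure M {w \<in> space M. s0 w = 1} = phi1 a b"
    and "\<And>j x y. 0 \<le> x \<Longrightarrow> 0 \<le> y \<Longrightarrow>
           measure M {w \<in> space M. x < fst (Z 1 j w) \<and> y < snd (Z 1 j w)} = BVE_surv l1 l2 l3 x y"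
    and "\<And>j x y. 0 \<le> x \<Longrightarrow> 0 \<le> y \<Longrightarrow>
           measure M {w \<in> space M. x < fst (Z 2 j w) \<and> y < snd (Z 2 j w)} = BVE_surv w1 w2 w3 x y"
    and "\<And>j. measure M {w \<in> space M. C 1 j w} = a"
    and "\<And>j. measure M {w \<in> space M. C 2 j w} = b"
    and "prob_space.indep_sets M
           (\<lambda>i. case i of
                  Init \<Rightarrow> gen_sets M s0 (count_space UNIV)
                | Incr s j \<Rightarrow> gen_sets M (Z s j) borel
                | Coin s j \<Rightarrow> gen_sets M (C s j) (count_space UNIV))
           mmpp_indices"
  shows "\<exists>K > 0. \<forall>th1 th2. th1 < K \<longrightarrow> th2 < K \<longrightarrow>
           integrable M (\<lambda>w. exp (fst (first_TK Z C s0 w) * th1 + snd (first_TK Z C s0 w) * th2)) \<and>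
           (\<integral>w. exp (fst (first_TK Z C s0 w) * th1 + snd (first_TK Z C s0 w) * th2) \<partial>M)
             = mmpp_H l1 l2 l3 w1 w2 w3 a b th1 th2"
proof -
  interpret mmpp M l1 l2 l3 w1 w2 w3 a b s0 Z C
    by (rule mmpp.intro[OF assms(1)], rule mmpp_axioms.intro) (use assms in auto)
  obtain K where K: "K > 0" "K < l1" "K < w1" "K < l2" "K < w2" "a * b * LL K K 1 * LL K K 2 < 1"
    using choose_K by blast
  show ?thesis
  proof (intro exI[of _ K] conjI allI impI K(1))
    fix th1 th2 :: real assume th: "th1 < K" "th2 < K"
    have t: "th1 < l1" "th1 < w1" "th2 < l2" "th2 < w2" using th K by auto
    have m1: "LL th1 th2 1 \<le> LL K K 1" by (rule LL_mono) (use th K in auto)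
    have m2: "LL th1 th2 2 \<le> LL K K 2" by (rule LL_mono) (use th K in auto)
    have "a * b * LL th1 th2 1 * LL th1 th2 2 \<le> a * b * LL K K 1 * LL K K 2"
      using m1 m2 LL_nn[OF t] LL_nn[of K K] K ab
      by (intro mult_mono mult_nonneg_nonneg) auto
    then have q: "a * b * LL th1 th2 1 * LL th1 th2 2 < 1" using K(6) by simp
    have hb: "has_bochner_integral M (ff th1 th2) (Vs th1 th2 1 + Vs th1 th2 2)"
      by (rule mgf_final[OF t q])
    then have hb': "has_bochner_integral M (\<lambda>w. exp (fst (first_TK Z C s0 w) * th1 + snd (first_TK Z C s0 w) * th2))
        (mmpp_H l1 l2 l3 w1 w2 w3 a b th1 th2)"
      unfolding Vs_H[OF t q] ff_def[abs_def] .
    show "integrable M (\<lambda>w. exp (fst (first_TK Z C s0 w) * th1 + snd (first_TK Z C s0 w) * th2))"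
      using hb' by (simp add: has_bochner_integral_iff)
    show "(\<integral>w. exp (fst (first_TK Z C s0 w) * th1 + snd (first_TK Z C s0 w) * th2) \<partial>M)
             = mmpp_H l1 l2 l3 w1 w2 w3 a b th1 th2"
      using hb' by (simp add: has_bochner_integral_iff)
  qed
qed


end
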